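(* Let $f_1,\dots,f_n:\mathbb{R}^d\to\mathbb{R}$ be convex functions all of whose subgradients have Euclidean norm at most $L$, let $\Omega\subseteq\mathbb{R}^d$ be a closed convex set of diameter at most $D$, let $F(x)=\frac1n\sum_{i=1}^n f_i(x)$, $F^*=\min_{x\in\Omega}F(x)$, and let $x^*\in\arg\min_{x\in\Omega}F(x)$. Let $W$ be an $n\times n$ nonnegative doubly stochastic matrix with positive diagonal whose positive entries define a strongly connected directed graph, and let $\sigma<1$ be its second-largest singular value. Let the step-size $(\alpha(t))_{t\ge1}$ be positive and nonincreasing with $\sum_t\alpha(t)=+\infty$, $\sum_t\alpha^2(t)<\infty$, and suppose there are constants $C_\alpha, C_\alpha'$ with $\sum_{k=1}^t\alpha(k)\le C_\alpha\sum_{k=\lceil t/2\rceil}^t\alpha(k)$ and $\alpha(\lfloor t/2\rfloor)\le C_\alpha'\alpha(t)$ for all positive integers $t$. Let $\alpha_{\max}=\max_t\alpha(t)$. Consider the iteration $$x(t+1)=W\,P_\Omega\big[x(t)-\alpha(t)g(t)\big],\quad t\ge1,$$ where $x(t)$ is $n\times d$ with rows $x_i(t)$, all rows of $x(1)$ equal to a common point of $\Omega$, $g(t)$ has rows $g_i(t)$ with $g_i(t)$ a subgradient of $f_i$ at $x_i(t)$, and $P_\Omega$ acts row-wise as Euclidean projection onto $\Omega$. Let $\overline{x}(t)=\frac1n\sum_i x_i(t)$, $t'=\lfloor t/2\rfloor$, and $x'_\alpha(t)=\frac{\sum_{k=t'}^t\alpha(k)\overline{x}(k)}{\sum_{k=t'}^t\alpha(k)}$.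 Then there is an absolute constant $c>0$ such that, whenever $t$ satisfies $$\sum_{k=\lfloor t/2\rfloor}^{\infty}\alpha^2(k)\le\frac{D^2(1-\sigma)}{10C_\alpha'L^2}\quad\text{and}\quad t\ge\frac{c}{1-\sigma}\log\Big[\frac{(1-\sigma)\,t\,\alpha_{\max}}{C_\alpha'\alpha(t)}\Big],$$ we have $$F(x'_\alpha(t))-F^*\le\frac{D^2C_\alpha}{\sum_{k=1}^t\alpha(k)}.$$ Moreover, if $\alpha(t)=1/t^\beta$ with $\beta\in(1/2,1)$, there are constants $c_\beta, C_\beta>0$ depending only on $\beta$ such that whenever $t$ satisfies the second (logarithmic) condition above and additionally $t^{2\beta-1}\ge c_\beta\frac{L^2}{D^2(1-\sigma)}$, we have $F(x'_\alpha(t))-F^*\le C_\beta\frac{D^2}{t^{1-\beta}}$.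
   Context: $P_\Omega$ denotes Euclidean projection onto $\Omega$. The second-largest singular value $\sigma$ of $W$ satisfies $\sigma<1$ under the stated assumptions on $W$ (the largest singular value is $1$, attained at the all-ones vector). *)

theory Defs
  imports "HOL-Analysis.Analysis"
begin

text \<open>Since the constants c, c_beta, C_beta must be
  uniform in the dimension d and the number of agents n, both are natural numbers
  quantified inside the statement.  A vector of R^d is a function nat => real that
  vanishes outside {..<d}; an n x n matrix is a function nat => nat => real read on
  indices below n; agents are indexed by {..<n}.\<close>

definition Rd :: "nat \<Rightarrow> (nat \<Rightarrow> real) set" where
  "Rd d = {v. \<forall>j\<ge>d. v j = 0}"

definition vdiff :: "(nat \<Rightarrow> real) \<Rightarrow> (nat \<Rightarrow> real) \<Rightarrow> (nat \<Rightarrow> real)" where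
  "vdiff u v = (\<lambda>j. u j - v j)"

definition vscale :: "real \<Rightarrow> (nat \<Rightarrow> real) \<Rightarrow> (nat \<Rightarrow> real)" where
  "vscale a v = (\<lambda>j. a * v j)"

definition ip :: "nat \<Rightarrow> (nat \<Rightarrow> real) \<Rightarrow> (nat \<Rightarrow> real) \<Rightarrow> real" where
  "ip d u v = (\<Sum>j<d. u j * v j)"

definition enorm :: "nat \<Rightarrow> (nat \<Rightarrow> real) \<Rightarrow> real" where
  "enorm d v = L2_set v {..<d}"

definition cvx_fun :: "nat \<Rightarrow> ((nat \<Rightarrow> real) \<Rightarrow> real) \<Rightarrow> bool" where
  "cvx_fun d f \<longleftrightarrow> (\<forall>x\<in>Rd d. \<forall>y\<in>Rd d. \<forall>u::real. 0 \<le> u \<and> u \<le> 1 \<longrightarrow>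
      f (\<lambda>j. u * x j + (1 - u) * y j) \<le> u * f x + (1 - u) * f y)"

definition cvx_set :: "nat \<Rightarrow> (nat \<Rightarrow> real) set \<Rightarrow> bool" where
  "cvx_set d S \<longleftrightarrow> S \<subseteq> Rd d \<and> (\<forall>x\<in>S. \<forall>y\<in>S. \<forall>u::real. 0 \<le> u \<and> u \<le> 1 \<longrightarrow>
      (\<lambda>j. u * x j + (1 - u) * y j) \<in> S)"

definition closed_set :: "nat \<Rightarrow> (nat \<Rightarrow> real) set \<Rightarrow> bool" where
  "closed_set d S \<longleftrightarrow> S \<subseteq> Rd d \<and> (\<forall>X y. (\<forall>k. X k \<in> S) \<and> y \<in> Rd d \<and>
      (\<lambda>k. enorm d (vdiff (X k) y)) \<longlonglongrightarrow> 0 \<longrightarrow> y \<in> S)"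

definition subgrad :: "nat \<Rightarrow> ((nat \<Rightarrow> real) \<Rightarrow> real) \<Rightarrow> (nat \<Rightarrow> real) \<Rightarrow> (nat \<Rightarrow> real) \<Rightarrow> bool" where
  "subgrad d f x g \<longleftrightarrow> g \<in> Rd d \<and> (\<forall>y\<in>Rd d. f y \<ge> f x + ip d g (vdiff y x))"

definition proj :: "nat \<Rightarrow> (nat \<Rightarrow> real) set \<Rightarrow> (nat \<Rightarrow> real) \<Rightarrow> (nat \<Rightarrow> real)" where
  "proj d S y = (SOME p. p \<in> S \<and> (\<forall>q\<in>S. enorm d (vdiff y p) \<le> enorm d (vdiff y q)))"

text \<open>sigma is the second-largest singular value of the n x n matrix W: the singular
  values are the numbers s_k \<ge> 0 such that s_k^2 are the eigenvalues (with multiplicity)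
  of W^T W, i.e. W^T W has an orthonormal eigenbasis u_0..u_{n-1} with eigenvalues s_k^2;
  sigma is the largest of them after removing one copy of the largest.\<close>
definition second_singular_value :: "nat \<Rightarrow> (nat \<Rightarrow> nat \<Rightarrow> real) \<Rightarrow> real \<Rightarrow> bool" where
  "second_singular_value n W \<sigma> \<longleftrightarrow> (\<exists>(u::nat \<Rightarrow> nat \<Rightarrow> real) (s::nat \<Rightarrow> real) p.
      (\<forall>k<n. \<forall>l<n. (\<Sum>m<n. u k m * u l m) = (if k = l then 1 else 0)) \<and>
      (\<forall>k<n. 0 \<le> s k \<and>
         (\<forall>i<n. (\<Sum>j<n. (\<Sum>m<n. W m i * W m j) * u k j) = (s k)\<^sup>2 * u k i)) \<and>
      p < n \<and> (\<forall>k<n. s k \<le> s p) \<and> \<sigma> = Max (s ` ({..<n} - {p})))"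

definition doubly_stochastic :: "nat \<Rightarrow> (nat \<Rightarrow> nat \<Rightarrow> real) \<Rightarrow> bool" where
  "doubly_stochastic n W \<longleftrightarrow> (\<forall>i<n. \<forall>j<n. 0 \<le> W i j) \<and>
      (\<forall>i<n. (\<Sum>j<n. W i j) = 1) \<and> (\<forall>j<n. (\<Sum>i<n. W i j) = 1)"

definition strongly_connected :: "nat \<Rightarrow> (nat \<Rightarrow> nat \<Rightarrow> real) \<Rightarrow> bool" where
  "strongly_connected n W \<longleftrightarrow>
     (\<forall>i<n. \<forall>j<n. (i, j) \<in> {(a, b). a < n \<and> b < n \<and> W a b > 0}\<^sup>*)"

definition Favg :: "nat \<Rightarrow> (nat \<Rightarrow> (nat \<Rightarrow> real) \<Rightarrow> real) \<Rightarrow> (nat \<Rightarrow> real) \<Rightarrow> real" where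
  "Favg n f y = (1 / real n) * (\<Sum>i<n. f i y)"

text \<open>xbar(t) = (1/n) sum_i x_i(t); x t i is row i of x(t).\<close>
definition xbar :: "nat \<Rightarrow> (nat \<Rightarrow> nat \<Rightarrow> (nat \<Rightarrow> real)) \<Rightarrow> nat \<Rightarrow> (nat \<Rightarrow> real)" where
  "xbar n x t = (\<lambda>j. (1 / real n) * (\<Sum>i<n. x t i j))"

definition xalpha :: "nat \<Rightarrow> (nat \<Rightarrow> real) \<Rightarrow> (nat \<Rightarrow> nat \<Rightarrow> (nat \<Rightarrow> real)) \<Rightarrow> nat \<Rightarrow> (nat \<Rightarrow> real)" where
  "xalpha n \<alpha> x t = (\<lambda>j. (\<Sum>k=t div 2..t. \<alpha> k * xbar n x k j) / (\<Sum>k=t div 2..t. \<alpha> k))"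

definition dsgd_setting ::
  "nat \<Rightarrow> nat \<Rightarrow> (nat \<Rightarrow> (nat \<Rightarrow> real) \<Rightarrow> real) \<Rightarrow> real \<Rightarrow> (nat \<Rightarrow> real) set \<Rightarrow> real \<Rightarrow>
   (nat \<Rightarrow> nat \<Rightarrow> real) \<Rightarrow> real \<Rightarrow> (nat \<Rightarrow> real) \<Rightarrow> real \<Rightarrow> real \<Rightarrow>
   (nat \<Rightarrow> nat \<Rightarrow> (nat \<Rightarrow> real)) \<Rightarrow> (nat \<Rightarrow> nat \<Rightarrow> (nat \<Rightarrow> real)) \<Rightarrow> (nat \<Rightarrow> real) \<Rightarrow> bool" where
  "dsgd_setting n d f L \<Omega> D W \<sigma> \<alpha> Ca Ca' x g xs \<longleftrightarrow>
     \<comment> \<open>dimensions\<close>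
     1 \<le> d \<and> 2 \<le> n \<and>
     \<comment> \<open>convex functions with subgradients bounded by L\<close>
     (\<forall>i<n. cvx_fun d (f i)) \<and>
     (\<forall>i<n. \<forall>y\<in>Rd d. \<forall>v. subgrad d (f i) y v \<longrightarrow> enorm d v \<le> L) \<and>
     \<comment> \<open>closed convex set of diameter at most D\<close>
     cvx_set d \<Omega> \<and> closed_set d \<Omega> \<and>
     (\<forall>y\<in>\<Omega>. \<forall>z\<in>\<Omega>. enorm d (vdiff y z) \<le> D) \<and>
     \<comment> \<open>x* is a minimiser of F over Omega\<close>
     xs \<in> \<Omega> \<and> (\<forall>y\<in>\<Omega>. Favg n f xs \<le> Favg n f y) \<and>
     \<comment> \<open>mixing matrix\<close>
     doubly_stochastic n W \<and> (\<forall>i<n. 0 < W i i) \<and> strongly_connected n W \<and>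
     second_singular_value n W \<sigma> \<and> \<sigma> < 1 \<and>
     \<comment> \<open>step sizes, indexed from 1\<close>
     (\<forall>k\<ge>1. 0 < \<alpha> k) \<and> (\<forall>k\<ge>1. \<alpha> (Suc k) \<le> \<alpha> k) \<and>
     filterlim (\<lambda>T. \<Sum>k=1..T. \<alpha> k) at_top sequentially \<and>
     summable (\<lambda>k. (\<alpha> (Suc k))\<^sup>2) \<and>
     (\<forall>t\<ge>1. (\<Sum>k=1..t. \<alpha> k) \<le> Ca * (\<Sum>k=(t + 1) div 2..t. \<alpha> k)) \<and>
     (\<forall>t\<ge>2. \<alpha> (t div 2) \<le> Ca' * \<alpha> t) \<and>
     \<comment> \<open>the iteration\<close>
     (\<exists>x0\<in>\<Omega>. \<forall>i<n. x 1 i = x0) \<and>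
     (\<forall>t\<ge>1. \<forall>i<n. subgrad d (f i) (x t i) (g t i)) \<and>
     (\<forall>t\<ge>1. \<forall>i<n. x (Suc t) i =
        (\<lambda>j. \<Sum>m<n. W i m * proj d \<Omega> (vdiff (x t m) (vscale (\<alpha> t) (g t m))) j))"

end

theory Submission
  imports Defs "Jordan_Normal_Form.Determinant"
begin


definition nsq :: "nat \<Rightarrow> (nat \<Rightarrow> real) \<Rightarrow> real" where
  "nsq d v = (\<Sum>j<d. (v j)\<^sup>2)"

lemma nsq_ge0: "0 \<le> nsq d v"
  unfolding nsq_def by (simp add: sum_nonneg)

lemma enorm_nsq: "enorm d v = sqrt (nsq d v)"
  unfolding enorm_def nsq_def L2_set_def by simp

lemma enorm_ge0: "0 \<le> enorm d v"
  by (simp add: enorm_nsq nsq_ge0)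

lemma enorm_sq: "(enorm d v)\<^sup>2 = nsq d v"
  by (simp add: enorm_nsq nsq_ge0)

lemma nsq_le_iff: "enorm d u \<le> enorm d v \<longleftrightarrow> nsq d u \<le> nsq d v"
  by (simp add: enorm_nsq nsq_ge0)

lemma ip_self: "ip d v v = nsq d v"
  unfolding ip_def nsq_def by (simp add: power2_eq_square)

lemma ip_sym: "ip d u v = ip d v u"
  unfolding ip_def by (simp add: mult.commute)

lemma cauchy_schwarz: "ip d u v \<le> enorm d u * enorm d v"
proof -
  have "ip d u v \<le> (\<Sum>j<d. \<bar>u j\<bar> * \<bar>v j\<bar>)"
    unfolding ip_def by (intro sum_mono) (simp add: abs_mult[symmetric])
  also have "\<dots> \<le> enorm d u * enorm d v"
    unfolding enorm_def by (rule L2_set_mult_ineq)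
  finally show ?thesis .
qed

lemma enorm_triangle: "enorm d (\<lambda>j. u j + v j) \<le> enorm d u + enorm d v"
  unfolding enorm_def by (rule L2_set_triangle_ineq)

lemma vdiff_split: "vdiff y z = (\<lambda>j. vdiff y p j + vdiff p z j)"
  unfolding vdiff_def by auto

lemma enorm_vdiff_tri: "enorm d (vdiff y z) \<le> enorm d (vdiff y p) + enorm d (vdiff p z)"
  by (subst vdiff_split[of y z p]) (rule enorm_triangle)

lemma nsq_expand: "nsq d (\<lambda>j. a j - b j) = nsq d a - 2 * ip d a b + nsq d b"
  unfolding nsq_def ip_def
  by (simp add: power2_diff sum.distrib sum_subtractf sum_distrib_left mult.assoc)

lemma enorm_vdiff_sym: "enorm d (vdiff a b) = enorm d (vdiff b a)"
  unfolding enorm_nsq nsq_def vdiff_def by (simp add: power2_commute)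

lemma ip_diff_left: "ip d (\<lambda>j. a j - b j) c = ip d a c - ip d b c"
  unfolding ip_def by (simp add: algebra_simps sum_subtractf)

lemma ip_scale_left: "ip d (\<lambda>j. r * a j) c = r * ip d a c"
  unfolding ip_def by (simp add: algebra_simps sum_distrib_left)

lemma coord_le_nsq: "j < d \<Longrightarrow> (v j)\<^sup>2 \<le> nsq d v"
  unfolding nsq_def by (rule member_le_sum) auto

lemma enorm_le_sum_abs: "enorm d v \<le> (\<Sum>j<d. \<bar>v j\<bar>)"
  unfolding enorm_def by (rule L2_set_le_sum_abs)




definition dq :: "((nat \<Rightarrow> real) \<Rightarrow> real) \<Rightarrow> (nat \<Rightarrow> real) \<Rightarrow> (nat \<Rightarrow> real) \<Rightarrow> real \<Rightarrow> real" where
  "dq f x v \<tau> = (f (\<lambda>j. x j + \<tau> * v j) - f x) / \<tau>"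

definition dd :: "((nat \<Rightarrow> real) \<Rightarrow> real) \<Rightarrow> (nat \<Rightarrow> real) \<Rightarrow> (nat \<Rightarrow> real) \<Rightarrow> real" where
  "dd f x v = Inf (dq f x v ` {0<..})"

lemma Rd_lin: "x \<in> Rd d \<Longrightarrow> v \<in> Rd d \<Longrightarrow> (\<lambda>j. a * x j + b * v j) \<in> Rd d"
  unfolding Rd_def by auto

lemma Rd_lin': "x \<in> Rd d \<Longrightarrow> v \<in> Rd d \<Longrightarrow> (\<lambda>j. x j + b * v j) \<in> Rd d"
  unfolding Rd_def by auto

lemma cvxD: "cvx_fun d f \<Longrightarrow> x \<in> Rd d \<Longrightarrow> y \<in> Rd d \<Longrightarrow> 0 \<le> u \<Longrightarrow> u \<le> 1 \<Longrightarrow>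
    f (\<lambda>j. u * x j + (1 - u) * y j) \<le> u * f x + (1 - u) * f y"
  unfolding cvx_fun_def by blast

context
  fixes d f x
  assumes cf: "cvx_fun d f" and xR: "x \<in> Rd d"
begin

lemma dq_lower:
  assumes vR: "v \<in> Rd d" and t: "0 < \<tau>"
  shows "f x - f (\<lambda>j. x j - v j) \<le> dq f x v \<tau>"
proof -
  let ?a = "\<lambda>j. x j + \<tau> * v j" and ?b = "\<lambda>j. x j - v j"
  define u where "u = 1 / (1 + \<tau>)"
  have aR: "?a \<in> Rd d" using Rd_lin'[OF xR vR] .
  have bR: "?b \<in> Rd d" using Rd_lin'[OF xR vR, of "-1"] by simp
  have u0: "0 \<le> u" "u \<le> 1" using t unfolding u_def by auto
  have eq: "(\<lambda>j. u * ?a j + (1 - u) * ?b j) = x"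
  proof
    fix j
    have "u * ?a j + (1 - u) * ?b j = x j + (u * \<tau> - (1 - u)) * v j" by (simp add: algebra_simps)
    also have "u * \<tau> - (1 - u) = 0" using t unfolding u_def by (simp add: field_simps)
    finally show "u * ?a j + (1 - u) * ?b j = x j" by simp
  qed
  have "f x \<le> u * f ?a + (1 - u) * f ?b" using cvxD[OF cf aR bR u0] unfolding eq .
  hence "(1 + \<tau>) * f x \<le> (1 + \<tau>) * (u * f ?a + (1 - u) * f ?b)" using t by simp
  also have "(1 + \<tau>) * (u * f ?a + (1 - u) * f ?b) = f ?a + \<tau> * f ?b"
  proof -
    have h1: "(1 + \<tau>) * u = 1" using t unfolding u_def by simp
    have h2: "(1 + \<tau>) * (1 - u) = \<tau>" using t unfolding u_def by (simp add: field_simps)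
    have "(1 + \<tau>) * (u * f ?a + (1 - u) * f ?b) = ((1 + \<tau>) * u) * f ?a + ((1 + \<tau>) * (1 - u)) * f ?b"
      by (simp add: algebra_simps)
    thus ?thesis using h1 h2 by simp
  qed
  finally have "\<tau> * (f x - f ?b) \<le> f ?a - f x" by (simp add: algebra_simps)
  thus ?thesis unfolding dq_def using t by (simp add: pos_le_divide_eq mult.commute)
qed

lemma dq_mono:
  assumes vR: "v \<in> Rd d" and s: "0 < s" and st: "s \<le> \<tau>"
  shows "dq f x v s \<le> dq f x v \<tau>"
proof -
  let ?a = "\<lambda>j. x j + \<tau> * v j"
  define u where "u = s / \<tau>"
  have t: "0 < \<tau>" using s st by simp
  have aR: "?a \<in> Rd d" using Rd_lin'[OF xR vR] .
  have u0: "0 \<le> u" "u \<le> 1" using s st t unfolding u_def by auto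
  have eq: "(\<lambda>j. u * ?a j + (1 - u) * x j) = (\<lambda>j. x j + s * v j)"
  proof
    fix j show "u * ?a j + (1 - u) * x j = x j + s * v j"
      using t unfolding u_def by (simp add: field_simps)
  qed
  have "f (\<lambda>j. x j + s * v j) \<le> u * f ?a + (1 - u) * f x"
    using cvxD[OF cf aR xR u0] unfolding eq .
  hence "f (\<lambda>j. x j + s * v j) - f x \<le> u * (f ?a - f x)" by (simp add: algebra_simps)
  hence "(f (\<lambda>j. x j + s * v j) - f x) / s \<le> (u * (f ?a - f x)) / s"
    using s by (simp add: divide_right_mono)
  also have "(u * (f ?a - f x)) / s = (f ?a - f x) / \<tau>" using s t unfolding u_def by simp
  finally show ?thesis unfolding dq_def .
qed

lemma dd_bdd: "v \<in> Rd d \<Longrightarrow> bdd_below (dq f x v ` {0<..})"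
  by (rule bdd_belowI[of _ "f x - f (\<lambda>j. x j - v j)"]) (auto intro: dq_lower)

lemma dd_le: "v \<in> Rd d \<Longrightarrow> 0 < \<tau> \<Longrightarrow> dd f x v \<le> dq f x v \<tau>"
  unfolding dd_def by (rule cInf_lower) (auto intro: dd_bdd)

lemma dd_ge: "v \<in> Rd d \<Longrightarrow> (\<And>\<tau>. 0 < \<tau> \<Longrightarrow> c \<le> dq f x v \<tau>) \<Longrightarrow> c \<le> dd f x v"
  unfolding dd_def by (rule cInf_greatest) auto

lemma dq_scale: "0 < a \<Longrightarrow> 0 < \<tau> \<Longrightarrow> dq f x (\<lambda>j. a * v j) \<tau> = a * dq f x v (a * \<tau>)"
  unfolding dq_def by (simp add: ac_simps)

lemma dd_scale:
  assumes vR: "v \<in> Rd d" and a: "0 < a"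
  shows "dd f x (\<lambda>j. a * v j) = a * dd f x v"
proof -
  have avR: "(\<lambda>j. a * v j) \<in> Rd d" using vR unfolding Rd_def by auto
  have "dd f x (\<lambda>j. a * v j) / a \<le> dd f x v"
  proof (rule dd_ge[OF vR])
    fix s :: real assume s: "0 < s"
    have "dd f x (\<lambda>j. a * v j) \<le> dq f x (\<lambda>j. a * v j) (s / a)"
      using s a by (intro dd_le[OF avR]) auto
    also have "\<dots> = a * dq f x v s" using dq_scale[OF a, of "s/a" v] a s by simp
    finally show "dd f x (\<lambda>j. a * v j) / a \<le> dq f x v s" using a by (simp add: divide_le_eq mult.commute)
  qed
  moreover have "a * dd f x v \<le> dd f x (\<lambda>j. a * v j)"
  proof (rule dd_ge[OF avR])
    fix s :: real assume s: "0 < s"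
    have "a * dd f x v \<le> a * dq f x v (a * s)"
      using s a by (intro mult_left_mono dd_le[OF vR]) auto
    also have "\<dots> = dq f x (\<lambda>j. a * v j) s" using dq_scale[OF a s] by simp
    finally show "a * dd f x v \<le> dq f x (\<lambda>j. a * v j) s" .
  qed
  ultimately show ?thesis using a by (simp add: divide_le_eq mult.commute)
qed

lemma dq_add:
  assumes uR: "u \<in> Rd d" and wR: "w \<in> Rd d" and t: "0 < \<tau>"
  shows "dq f x (\<lambda>j. u j + w j) \<tau> \<le> dq f x u (2 * \<tau>) + dq f x w (2 * \<tau>)"
proof -
  let ?a = "\<lambda>j. x j + (2 * \<tau>) * u j" and ?b = "\<lambda>j. x j + (2 * \<tau>) * w j"
  have aR: "?a \<in> Rd d" using Rd_lin'[OF xR uR] .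
  have bR: "?b \<in> Rd d" using Rd_lin'[OF xR wR] .
  have eq: "(\<lambda>j. (1/2) * ?a j + (1 - 1/2) * ?b j) = (\<lambda>j. x j + \<tau> * (u j + w j))"
    by (rule ext) (simp add: algebra_simps)
  have "f (\<lambda>j. x j + \<tau> * (u j + w j)) \<le> (1/2) * f ?a + (1 - 1/2) * f ?b"
    using cvxD[OF cf aR bR, of "1/2"] unfolding eq by simp
  hence "2 * (f (\<lambda>j. x j + \<tau> * (u j + w j)) - f x) \<le> (f ?a - f x) + (f ?b - f x)" by simp
  hence "2 * (f (\<lambda>j. x j + \<tau> * (u j + w j)) - f x) / (2 * \<tau>) \<le> ((f ?a - f x) + (f ?b - f x)) / (2 * \<tau>)"
    using t by (intro divide_right_mono) auto
  moreover have "2 * (f (\<lambda>j. x j + \<tau> * (u j + w j)) - f x) / (2 * \<tau>) = (f (\<lambda>j. x j + \<tau> * (u j + w j)) - f x) / \<tau>"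
    by (rule mult_divide_mult_cancel_left) simp
  moreover have "((f ?a - f x) + (f ?b - f x)) / (2 * \<tau>) = (f ?a - f x) / (2 * \<tau>) + (f ?b - f x) / (2 * \<tau>)"
    by (rule add_divide_distrib)
  ultimately have "(f (\<lambda>j. x j + \<tau> * (u j + w j)) - f x) / \<tau> \<le> (f ?a - f x) / (2 * \<tau>) + (f ?b - f x) / (2 * \<tau>)"
    by simp
  thus ?thesis unfolding dq_def .
qed

lemma dd_add:
  assumes uR: "u \<in> Rd d" and wR: "w \<in> Rd d"
  shows "dd f x (\<lambda>j. u j + w j) \<le> dd f x u + dd f x w"
proof -
  have uwR: "(\<lambda>j. u j + w j) \<in> Rd d" using uR wR unfolding Rd_def by auto
  have key: "dd f x (\<lambda>j. u j + w j) \<le> dq f x u s1 + dq f x w s2" if s1: "0 < s1" and s2: "0 < s2" for s1 s2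
  proof -
    define \<tau> where "\<tau> = min s1 s2 / 2"
    have t: "0 < \<tau>" using s1 s2 unfolding \<tau>_def by simp
    have "dd f x (\<lambda>j. u j + w j) \<le> dq f x (\<lambda>j. u j + w j) \<tau>" by (rule dd_le[OF uwR t])
    also have "\<dots> \<le> dq f x u (2 * \<tau>) + dq f x w (2 * \<tau>)" by (rule dq_add[OF uR wR t])
    also have "\<dots> \<le> dq f x u s1 + dq f x w s2"
      using t s1 s2 unfolding \<tau>_def by (intro add_mono dq_mono uR wR) auto
    finally show ?thesis .
  qed
  have "dd f x (\<lambda>j. u j + w j) - dd f x w \<le> dd f x u"
  proof (rule dd_ge[OF uR])
    fix s1 :: real assume s1: "0 < s1"
    have "dd f x (\<lambda>j. u j + w j) - dq f x u s1 \<le> dd f x w"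
      by (rule dd_ge[OF wR]) (use key[OF s1] in force)
    thus "dd f x (\<lambda>j. u j + w j) - dd f x w \<le> dq f x u s1" by simp
  qed
  thus ?thesis by simp
qed

lemma dd_zero: "dd f x (\<lambda>j. 0) = 0"
proof -
  have "dq f x (\<lambda>j. 0) \<tau> = 0" for \<tau> unfolding dq_def by simp
  moreover have "(\<lambda>j. 0::real) \<in> Rd d" unfolding Rd_def by simp
  ultimately show ?thesis using dd_le[of "\<lambda>j. 0" 1] dd_ge[of "\<lambda>j. 0" 0] by force
qed

end




lemma vdiff_Rd: "u \<in> Rd d \<Longrightarrow> v \<in> Rd d \<Longrightarrow> vdiff u v \<in> Rd d"
  unfolding Rd_def vdiff_def by auto

lemma cvx_comb_mem: "cvx_set d S \<Longrightarrow> x \<in> S \<Longrightarrow> y \<in> S \<Longrightarrow> 0 \<le> u \<Longrightarrow> u \<le> 1 \<Longrightarrow>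
   (\<lambda>j. u * x j + (1 - u) * y j) \<in> S"
  unfolding cvx_set_def by blast

lemma minimiser_var:
  assumes cv: "cvx_set d S" and pS: "p \<in> S" and zS: "z \<in> S"
    and minp: "\<forall>q\<in>S. enorm d (vdiff y p) \<le> enorm d (vdiff y q)"
  shows "ip d (vdiff y p) (vdiff z p) \<le> 0"
proof (rule ccontr)
  let ?a = "ip d (vdiff y p) (vdiff z p)" and ?b = "nsq d (vdiff z p)"
  assume "\<not> ?a \<le> 0"
  hence a: "?a > 0" by simp
  have b: "?b \<ge> 0" by (rule nsq_ge0)
  define u where "u = min 1 (?a / (?b + 1))"
  have u0: "0 < u" using a b unfolding u_def by auto
  have u1: "u \<le> 1" unfolding u_def by auto
  have ub: "u * ?b < ?a"
  proof -
    have "u * ?b \<le> (?a / (?b + 1)) * ?b" using b unfolding u_def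
      by (intro mult_right_mono) auto
    also have "\<dots> < ?a" using a b by (simp add: field_simps)
    finally show ?thesis .
  qed
  let ?q = "\<lambda>j. u * z j + (1 - u) * p j"
  have qS: "?q \<in> S" using cvx_comb_mem[OF cv zS pS] u0 u1 by simp
  have eq: "vdiff y ?q = (\<lambda>j. vdiff y p j - u * vdiff z p j)"
    unfolding vdiff_def by (auto simp: algebra_simps)
  have "nsq d (vdiff y ?q) = nsq d (vdiff y p) - 2 * u * ?a + u\<^sup>2 * ?b"
    unfolding eq nsq_expand ip_sym[of d "vdiff y p"]
    by (simp add: ip_scale_left ip_sym nsq_def power_mult_distrib sum_distrib_left
        flip: ip_self)
  also have "\<dots> < nsq d (vdiff y p)"
  proof -
    have h1: "u\<^sup>2 * ?b < u * ?a" using ub u0 by (simp add: power2_eq_square mult.assoc)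
    have h2: "0 < u * ?a" using u0 a by simp
    have "2 * u * ?a = u * ?a + u * ?a" by simp
    thus ?thesis using h1 h2 by linarith
  qed
  finally have "nsq d (vdiff y ?q) < nsq d (vdiff y p)" .
  moreover have "nsq d (vdiff y p) \<le> nsq d (vdiff y ?q)"
    using minp qS by (simp add: nsq_le_iff[symmetric])
  ultimately show False by simp
qed

lemma minimiser_nonexp:
  assumes cv: "cvx_set d S" and pS: "p \<in> S" and zS: "z \<in> S"
    and minp: "\<forall>q\<in>S. enorm d (vdiff y p) \<le> enorm d (vdiff y q)"
  shows "enorm d (vdiff p z) \<le> enorm d (vdiff y z)"
proof -
  have v: "ip d (vdiff y p) (vdiff z p) \<le> 0" by (rule minimiser_var[OF assms])
  have eq: "vdiff y z = (\<lambda>j. vdiff y p j - vdiff z p j)" unfolding vdiff_def by auto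
  have "nsq d (vdiff y z) = nsq d (vdiff y p) - 2 * ip d (vdiff y p) (vdiff z p) + nsq d (vdiff z p)"
    unfolding eq by (rule nsq_expand)
  also have "\<dots> \<ge> nsq d (vdiff z p)" using v nsq_ge0[of d "vdiff y p"] by linarith
  finally have "nsq d (vdiff z p) \<le> nsq d (vdiff y z)" .
  thus ?thesis by (simp add: nsq_le_iff[symmetric] enorm_vdiff_sym[of d p z])
qed

lemma minimiser_exists:
  assumes cv: "cvx_set d S" and cl: "closed_set d S" and ne: "S \<noteq> {}"
  shows "\<exists>p. p \<in> S \<and> (\<forall>q\<in>S. enorm d (vdiff y p) \<le> enorm d (vdiff y q))"
proof -
  define N where "N = (\<lambda>q. enorm d (vdiff y q))"
  define \<delta> where "\<delta> = Inf (N ` S)"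
  have bdd: "bdd_below (N ` S)" unfolding N_def by (rule bdd_belowI[of _ 0]) (auto simp: enorm_ge0)
  have dle: "\<And>q. q \<in> S \<Longrightarrow> \<delta> \<le> N q" unfolding \<delta>_def by (rule cInf_lower) (use bdd in auto)
  have d0: "0 \<le> \<delta>" unfolding \<delta>_def using ne by (intro cInf_greatest) (auto simp: N_def enorm_ge0)
  have "\<forall>k. \<exists>q. q \<in> S \<and> N q < sqrt (\<delta>\<^sup>2 + 1 / (real k + 1))"
  proof
    fix k :: nat
    have "\<delta>\<^sup>2 < \<delta>\<^sup>2 + 1 / (real k + 1)" by simp
    hence "\<delta> < sqrt (\<delta>\<^sup>2 + 1 / (real k + 1))" by (rule real_less_rsqrt)
    hence "Inf (N ` S) < sqrt (\<delta>\<^sup>2 + 1 / (real k + 1))" by (simp add: \<delta>_def)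
    moreover have "N ` S \<noteq> {}" using ne by simp
    ultimately obtain r where "r \<in> N ` S" "r < sqrt (\<delta>\<^sup>2 + 1 / (real k + 1))"
      using cInf_lessD by metis
    thus "\<exists>q. q \<in> S \<and> N q < sqrt (\<delta>\<^sup>2 + 1 / (real k + 1))" by auto
  qed
  from choice[OF this] obtain p where p: "\<forall>k. p k \<in> S \<and> N (p k) < sqrt (\<delta>\<^sup>2 + 1 / (real k + 1))"
    by blast
  hence pS: "\<And>k. p k \<in> S" and pN: "\<And>k. N (p k) < sqrt (\<delta>\<^sup>2 + 1 / (real k + 1))" by auto
  have pN2: "nsq d (vdiff y (p k)) \<le> \<delta>\<^sup>2 + 1 / (real k + 1)" for k
  proof -
    have "N (p k) \<le> sqrt (\<delta>\<^sup>2 + 1 / (real k + 1))" using pN[of k] by simp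
    hence "(N (p k))\<^sup>2 \<le> (sqrt (\<delta>\<^sup>2 + 1 / (real k + 1)))\<^sup>2"
      using enorm_ge0 unfolding N_def by (intro power_mono) auto
    hence "(N (p k))\<^sup>2 \<le> \<delta>\<^sup>2 + 1 / (real k + 1)" by simp
    thus ?thesis unfolding N_def enorm_sq .
  qed
  have par: "nsq d (vdiff (p k) (p l)) \<le> 2 / (real k + 1) + 2 / (real l + 1)" for k l
  proof -
    let ?m = "\<lambda>j. (1/2) * p k j + (1 - 1/2) * p l j"
    have mS: "?m \<in> S" by (rule cvx_comb_mem[OF cv pS pS]) auto
    have "\<delta> \<le> N ?m" using dle mS .
    hence "\<delta>\<^sup>2 \<le> nsq d (vdiff y ?m)" unfolding N_def
      using d0 by (metis enorm_sq power_mono)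
    moreover have "nsq d (vdiff (p k) (p l)) = 2 * nsq d (vdiff y (p k)) + 2 * nsq d (vdiff y (p l))
        - 4 * nsq d (vdiff y ?m)"
    proof -
      have "nsq d (vdiff (p k) (p l)) = (\<Sum>j<d. 2 * (y j - p k j)\<^sup>2 + 2 * (y j - p l j)\<^sup>2
          - 4 * (y j - ((1/2) * p k j + (1 - 1/2) * p l j))\<^sup>2)"
        unfolding nsq_def vdiff_def by (rule sum.cong) (auto simp: power2_eq_square algebra_simps)
      thus ?thesis unfolding nsq_def vdiff_def by (simp add: sum.distrib sum_subtractf sum_distrib_left)
    qed
    ultimately show ?thesis using pN2[of k] pN2[of l] by linarith
  qed
  have cau: "Cauchy (\<lambda>k. p k j)" if j: "j < d" for j
  proof (rule metric_CauchyI)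
    fix e :: real assume e: "0 < e"
    obtain M :: nat where M: "4 / e\<^sup>2 < real M" using reals_Archimedean2 by blast
    show "\<exists>M. \<forall>m\<ge>M. \<forall>n\<ge>M. dist (p m j) (p n j) < e"
    proof (intro exI allI impI)
      fix m n assume mM: "M \<le> m" and nM: "M \<le> n"
      have "(p m j - p n j)\<^sup>2 \<le> nsq d (vdiff (p m) (p n))"
        using coord_le_nsq[OF j, of "vdiff (p m) (p n)"] by (simp add: vdiff_def)
      also have "\<dots> \<le> 2 / (real m + 1) + 2 / (real n + 1)" by (rule par)
      also have "\<dots> \<le> 2 / (real M + 1) + 2 / (real M + 1)"
        using mM nM by (intro add_mono divide_left_mono) auto
      also have "\<dots> < e\<^sup>2"
      proof -
        have "4 < real M * e\<^sup>2" using M e by (simp add: field_simps)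
        moreover have "0 \<le> e\<^sup>2" by simp
        moreover have "e\<^sup>2 * (real M + 1) = real M * e\<^sup>2 + e\<^sup>2" by (simp add: algebra_simps)
        ultimately have "4 < e\<^sup>2 * (real M + 1)" by linarith
        hence "4 / (real M + 1) < e\<^sup>2" by (simp add: pos_divide_less_eq)
        moreover have "2 / (real M + 1) + 2 / (real M + 1) = 4 / (real M + 1)" by (simp only: add_divide_distrib[symmetric]) simp
        ultimately show ?thesis by simp
      qed
      finally have "(p m j - p n j)\<^sup>2 < e\<^sup>2" .
      hence "sqrt ((p m j - p n j)\<^sup>2) < sqrt (e\<^sup>2)" by (rule real_sqrt_less_mono)
      hence "\<bar>p m j - p n j\<bar> < e" using e by simp
      thus "dist (p m j) (p n j) < e" by (simp add: dist_real_def)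
    qed
  qed
  define z where "z = (\<lambda>j. if j < d then lim (\<lambda>k. p k j) else 0)"
  have zlim: "(\<lambda>k. p k j) \<longlonglongrightarrow> z j" if j: "j < d" for j
    using cau[OF j] j unfolding z_def by (simp add: Cauchy_convergent_iff convergent_LIMSEQ_iff)
  have zR: "z \<in> Rd d" unfolding Rd_def z_def by auto
  have conv: "(\<lambda>k. enorm d (vdiff (p k) z)) \<longlonglongrightarrow> 0"
  proof (rule tendsto_sandwich[of "\<lambda>k. 0" _ _ "\<lambda>k. \<Sum>j<d. \<bar>p k j - z j\<bar>"])
    show "\<forall>\<^sub>F k in sequentially. 0 \<le> enorm d (vdiff (p k) z)" by (simp add: enorm_ge0)
    show "\<forall>\<^sub>F k in sequentially. enorm d (vdiff (p k) z) \<le> (\<Sum>j<d. \<bar>p k j - z j\<bar>)"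
      using enorm_le_sum_abs by (simp add: vdiff_def)
    show "(\<lambda>k. 0) \<longlonglongrightarrow> (0::real)" by simp
    have "(\<lambda>k. \<Sum>j<d. \<bar>p k j - z j\<bar>) \<longlonglongrightarrow> (\<Sum>j<d. \<bar>z j - z j\<bar>)"
      by (intro tendsto_sum tendsto_rabs tendsto_diff zlim tendsto_const) auto
    thus "(\<lambda>k. \<Sum>j<d. \<bar>p k j - z j\<bar>) \<longlonglongrightarrow> 0" by simp
  qed
  have zS: "z \<in> S" using cl pS zR conv unfolding closed_set_def by blast
  have "N z \<le> \<delta>"
  proof (rule tendsto_le[of sequentially "\<lambda>k. sqrt (\<delta>\<^sup>2 + 1 / (real k + 1)) + enorm d (vdiff (p k) z)" _ "\<lambda>k. N z"])
    show "sequentially \<noteq> bot" by simp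
    have "(\<lambda>k. sqrt (\<delta>\<^sup>2 + 1 / (real k + 1))) \<longlonglongrightarrow> sqrt (\<delta>\<^sup>2 + 0)"
    proof (intro tendsto_real_sqrt tendsto_add tendsto_const)
      show "(\<lambda>k. 1 / (real k + 1)) \<longlonglongrightarrow> 0"
        using LIMSEQ_inverse_real_of_nat by (simp add: divide_inverse add.commute)
    qed
    hence "(\<lambda>k. sqrt (\<delta>\<^sup>2 + 1 / (real k + 1))) \<longlonglongrightarrow> \<delta>" using d0 by simp
    from tendsto_add[OF this conv]
    show "(\<lambda>k. sqrt (\<delta>\<^sup>2 + 1 / (real k + 1)) + enorm d (vdiff (p k) z)) \<longlonglongrightarrow> \<delta>" by simp
    show "(\<lambda>k. N z) \<longlonglongrightarrow> N z" by simp
    show "\<forall>\<^sub>F k in sequentially. N z \<le> sqrt (\<delta>\<^sup>2 + 1 / (real k + 1)) + enorm d (vdiff (p k) z)"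
    proof (intro always_eventually allI)
      fix k
      have "N z \<le> N (p k) + enorm d (vdiff (p k) z)" unfolding N_def by (rule enorm_vdiff_tri)
      thus "N z \<le> sqrt (\<delta>\<^sup>2 + 1 / (real k + 1)) + enorm d (vdiff (p k) z)" using pN[of k] by simp
    qed
  qed
  hence "\<forall>q\<in>S. N z \<le> N q" using dle order_trans by blast
  hence "\<forall>q\<in>S. enorm d (vdiff y z) \<le> enorm d (vdiff y q)" unfolding N_def .
  thus ?thesis using zS by blast
qed

lemma proj_props:
  assumes cv: "cvx_set d S" and cl: "closed_set d S" and ne: "S \<noteq> {}"
  shows "proj d S y \<in> S" and "\<And>z. z \<in> S \<Longrightarrow> enorm d (vdiff (proj d S y) z) \<le> enorm d (vdiff y z)"
proof -
  have ex: "\<exists>p. p \<in> S \<and> (\<forall>q\<in>S. enorm d (vdiff y p) \<le> enorm d (vdiff y q))"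
    by (rule minimiser_exists[OF cv cl ne])
  have P: "proj d S y \<in> S \<and> (\<forall>q\<in>S. enorm d (vdiff y (proj d S y)) \<le> enorm d (vdiff y q))"
    using someI_ex[OF ex] unfolding proj_def .
  thus "proj d S y \<in> S" by simp
  fix z assume "z \<in> S"
  show "enorm d (vdiff (proj d S y) z) \<le> enorm d (vdiff y z)"
    using minimiser_nonexp[OF cv conjunct1[OF P] \<open>z \<in> S\<close> conjunct2[OF P]] .
qed




lemma ip_add_right: "ip d g (\<lambda>j. u j + w j) = ip d g u + ip d g w"
  unfolding ip_def by (simp add: algebra_simps sum.distrib)

lemma ip_scale_right: "ip d g (\<lambda>j. a * u j) = a * ip d g u"
  unfolding ip_def by (simp add: algebra_simps sum_distrib_left)

lemma hahn_banach_fd: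
  fixes p :: "(nat \<Rightarrow> real) \<Rightarrow> real"
  assumes hom: "\<And>v a. v \<in> Rd d \<Longrightarrow> 0 < a \<Longrightarrow> p (\<lambda>j. a * v j) = a * p v"
    and sub: "\<And>u w. u \<in> Rd d \<Longrightarrow> w \<in> Rd d \<Longrightarrow> p (\<lambda>j. u j + w j) \<le> p u + p w"
    and zer: "p (\<lambda>j. 0) = 0"
  shows "k \<le> d \<Longrightarrow> \<exists>g. (\<forall>j\<ge>k. g j = 0) \<and> (\<forall>v\<in>Rd d. (\<forall>j\<ge>k. v j = 0) \<longrightarrow> ip d g v \<le> p v)"
proof (induction k)
  case 0
  show ?case
  proof (intro exI conjI ballI impI allI)
    fix v assume "v \<in> Rd d" "\<forall>j\<ge>0. v j = 0"
    hence "v = (\<lambda>j. 0)" by auto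
    thus "ip d (\<lambda>j. 0) v \<le> p v" using zer unfolding ip_def by simp
  qed simp
next
  case (Suc k)
  hence kd: "k < d" by simp
  from Suc.IH kd obtain g where g0: "\<forall>j\<ge>k. g j = 0"
    and gp: "\<forall>v\<in>Rd d. (\<forall>j\<ge>k. v j = 0) \<longrightarrow> ip d g v \<le> p v" by auto
  define U where "U = {u. u \<in> Rd d \<and> (\<forall>j\<ge>k. u j = 0)}"
  define e :: "nat \<Rightarrow> real" where "e = (\<lambda>j. if j = k then 1 else 0)"
  have eR: "e \<in> Rd d" using kd unfolding e_def Rd_def by auto
  have Ulin: "(\<lambda>j. a * u j + b * w j) \<in> U" if "u \<in> U" "w \<in> U" for a b u w
    using that unfolding U_def Rd_def by auto
  have URd: "u \<in> U \<Longrightarrow> u \<in> Rd d" for u unfolding U_def by simp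
  have key: "ip d g u - p (\<lambda>j. u j - e j) \<le> p (\<lambda>j. w j + e j) - ip d g w" if uU: "u \<in> U" and wU: "w \<in> U" for u w
  proof -
    have uwU: "(\<lambda>j. 1 * u j + 1 * w j) \<in> U" by (rule Ulin[OF uU wU])
    have "ip d g u + ip d g w = ip d g (\<lambda>j. u j + w j)" by (simp add: ip_add_right)
    also have "\<dots> \<le> p (\<lambda>j. u j + w j)" using gp uwU unfolding U_def by auto
    also have "(\<lambda>j. u j + w j) = (\<lambda>j. (u j - e j) + (w j + e j))" by auto
    also have "p \<dots> \<le> p (\<lambda>j. u j - e j) + p (\<lambda>j. w j + e j)"
      using URd[OF uU] URd[OF wU] eR by (intro sub) (auto simp: Rd_def)
    finally show ?thesis by simp
  qed
  define A where "A = (\<lambda>u. ip d g u - p (\<lambda>j. u j - e j)) ` U"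
  define c where "c = Sup A"
  have z0: "(\<lambda>j. 0) \<in> U" unfolding U_def Rd_def by simp
  have Ane: "A \<noteq> {}" unfolding A_def using z0 by blast
  have k0: "\<And>u. u \<in> U \<Longrightarrow> ip d g u - p (\<lambda>j. u j - e j) \<le> p e - ip d g (\<lambda>j. 0)"
    using key[OF _ z0] by simp
  have Abdd: "bdd_above A" unfolding A_def
    by (rule bdd_aboveI[of _ "p e - ip d g (\<lambda>j. 0)"]) (use k0 in auto)
  have c1: "ip d g u - p (\<lambda>j. u j - e j) \<le> c" if "u \<in> U" for u
    unfolding c_def by (rule cSup_upper) (use that Abdd in \<open>auto simp: A_def\<close>)
  have c2: "c \<le> p (\<lambda>j. w j + e j) - ip d g w" if wU: "w \<in> U" for w
    unfolding c_def by (rule cSup_least[OF Ane]) (use key wU in \<open>auto simp: A_def\<close>)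
  define g' where "g' = g(k := c)"
  show ?case
  proof (intro exI conjI ballI impI allI)
    fix j :: nat assume "Suc k \<le> j" thus "g' j = 0" using g0 unfolding g'_def by auto
  next
    fix v assume vR: "v \<in> Rd d" and vs: "\<forall>j\<ge>Suc k. v j = 0"
    define a where "a = v k"
    define u where "u = v(k := 0)"
    have uU: "u \<in> U" using vR vs unfolding U_def u_def Rd_def
      by (auto simp: le_Suc_eq)
    have vdec: "v = (\<lambda>j. u j + a * e j)" unfolding u_def a_def e_def by auto
    have ipv: "ip d g' v = ip d g u + c * a"
    proof -
      have "ip d g' v = (\<Sum>j<d. g j * u j + (if j = k then c * a else 0))"
        unfolding ip_def by (rule sum.cong) (auto simp: g'_def u_def a_def g0)
      also have "\<dots> = ip d g u + c * a" using kd by (simp add: sum.distrib ip_def)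
      finally show ?thesis .
    qed
    consider "a > 0" | "a < 0" | "a = 0" by linarith
    thus "ip d g' v \<le> p v"
    proof cases
      case 1
      define w where "w = (\<lambda>j. (1 / a) * u j)"
      have wU: "w \<in> U" using Ulin[OF uU z0, of "1/a" 0] unfolding w_def by simp
      have "c \<le> p (\<lambda>j. w j + e j) - ip d g w" by (rule c2[OF wU])
      hence "a * c \<le> a * p (\<lambda>j. w j + e j) - a * ip d g w" using 1
        by (simp add: right_diff_distrib[symmetric])
      also have "a * ip d g w = ip d g u" unfolding w_def ip_scale_right using 1 by simp
      also have "a * p (\<lambda>j. w j + e j) = p (\<lambda>j. a * (w j + e j))"
        using hom[of "\<lambda>j. w j + e j" a] 1 URd[OF wU] eR by (auto simp: Rd_def)
      also have "(\<lambda>j. a * (w j + e j)) = v" unfolding vdec w_def using 1 by (auto simp: field_simps)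
      finally show ?thesis using ipv by (simp add: mult.commute)
    next
      case 2
      define b where "b = - a"
      have b: "0 < b" using 2 unfolding b_def by simp
      define w where "w = (\<lambda>j. (1 / b) * u j)"
      have wU: "w \<in> U" using Ulin[OF uU z0, of "1/b" 0] unfolding w_def by simp
      have "ip d g w - p (\<lambda>j. w j - e j) \<le> c" by (rule c1[OF wU])
      hence "b * ip d g w - b * p (\<lambda>j. w j - e j) \<le> b * c" using b
        by (simp add: right_diff_distrib[symmetric])
      also have "b * ip d g w = ip d g u" unfolding w_def ip_scale_right using b by simp
      also have "b * p (\<lambda>j. w j - e j) = p (\<lambda>j. b * (w j - e j))"
        using hom[of "\<lambda>j. w j - e j" b] b URd[OF wU] eR by (auto simp: Rd_def)
      also have "(\<lambda>j. b * (w j - e j)) = v" unfolding vdec w_def b_def using 2 by (auto simp: field_simps)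
      finally show ?thesis using ipv unfolding b_def by (simp add: mult.commute)
    next
      case 3
      have "v = u" using vdec 3 by simp
      moreover have "ip d g' v = ip d g u" using ipv 3 by simp
      ultimately show ?thesis using gp uU unfolding U_def by auto
    qed
  qed
qed

lemma subgrad_exists:
  assumes cf: "cvx_fun d f" and xR: "x \<in> Rd d"
  shows "\<exists>g. subgrad d f x g"
proof -
  have "\<exists>g. (\<forall>j\<ge>d. g j = 0) \<and> (\<forall>v\<in>Rd d. (\<forall>j\<ge>d. v j = 0) \<longrightarrow> ip d g v \<le> dd f x v)"
    by (rule hahn_banach_fd[of d "dd f x"])
       (auto intro: dd_scale[OF cf xR] dd_add[OF cf xR] dd_zero[OF cf xR])
  then obtain g where g0: "\<forall>j\<ge>d. g j = 0" and gp: "\<forall>v\<in>Rd d. ip d g v \<le> dd f x v"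
    unfolding Rd_def by auto
  have "subgrad d f x g" unfolding subgrad_def
  proof (intro conjI ballI)
    show "g \<in> Rd d" using g0 unfolding Rd_def by simp
    fix y assume yR: "y \<in> Rd d"
    have vR: "vdiff y x \<in> Rd d" using yR xR unfolding Rd_def vdiff_def by simp
    have "ip d g (vdiff y x) \<le> dd f x (vdiff y x)" using gp vR by blast
    also have "\<dots> \<le> dq f x (vdiff y x) 1" by (rule dd_le[OF cf xR vR]) simp
    also have "\<dots> = f y - f x" unfolding dq_def vdiff_def by simp
    finally show "f x + ip d g (vdiff y x) \<le> f y" by simp
  qed
  thus ?thesis by blast
qed

lemma lipschitz_bound:
  assumes cf: "cvx_fun d f" and xR: "x \<in> Rd d" and yR: "y \<in> Rd d"
    and L: "\<forall>z\<in>Rd d. \<forall>v. subgrad d f z v \<longrightarrow> enorm d v \<le> L"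
  shows "f y - f x \<le> L * enorm d (vdiff y x)"
proof -
  obtain h where h: "subgrad d f y h" using subgrad_exists[OF cf yR] by blast
  have "f x \<ge> f y + ip d h (vdiff x y)" using h xR unfolding subgrad_def by blast
  hence "f y - f x \<le> ip d h (vdiff y x)"
    unfolding ip_def vdiff_def by (simp add: algebra_simps sum_subtractf)
  also have "\<dots> \<le> enorm d h * enorm d (vdiff y x)" by (rule cauchy_schwarz)
  also have "\<dots> \<le> L * enorm d (vdiff y x)"
    using L h yR by (intro mult_right_mono) (auto simp: enorm_ge0)
  finally show ?thesis .
qed




lemma orth_complete:
  fixes u :: "nat \<Rightarrow> nat \<Rightarrow> real"
  assumes orth: "\<forall>k<n. \<forall>l<n. (\<Sum>m<n. u k m * u l m) = (if k = l then 1 else 0)"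
  shows "\<forall>i<n. \<forall>j<n. (\<Sum>k<n. u k i * u k j) = (if i = j then 1 else 0)"
proof -
  define U :: "real mat" where "U = mat n n (\<lambda>(k, m). u k m)"
  have Uc: "U \<in> carrier_mat n n" unfolding U_def by simp
  have UTc: "transpose_mat U \<in> carrier_mat n n" unfolding U_def by simp
  have "U * transpose_mat U = 1\<^sub>m n"
  proof (rule eq_matI)
    fix i j assume ij: "i < dim_row (1\<^sub>m n)" "j < dim_col (1\<^sub>m n)"
    hence "i < n" "j < n" by auto
    thus "(U * transpose_mat U) $$ (i, j) = 1\<^sub>m n $$ (i, j)"
      using orth unfolding U_def
      by (simp add: scalar_prod_def sum.atLeast0_lessThan_Suc lessThan_atLeast0[symmetric])
  qed (auto simp: U_def)
  hence I: "transpose_mat U * U = 1\<^sub>m n" by (rule mat_mult_left_right_inverse[OF Uc UTc])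
  show ?thesis
  proof (intro allI impI)
    fix i j assume i: "i < n" and j: "j < n"
    have "(transpose_mat U * U) $$ (i, j) = 1\<^sub>m n $$ (i, j)" using I by simp
    thus "(\<Sum>k<n. u k i * u k j) = (if i = j then 1 else 0)"
      using i j unfolding U_def by (simp add: scalar_prod_def lessThan_atLeast0)
  qed
qed

lemma spectral_contraction:
  fixes W :: "nat \<Rightarrow> nat \<Rightarrow> real" and z :: "nat \<Rightarrow> real"
  assumes ssv: "second_singular_value n W \<sigma>" and ds: "doubly_stochastic n W" and s1: "\<sigma> < 1"
    and n2: "2 \<le> n" and z0: "(\<Sum>m<n. z m) = 0"
  shows "(\<Sum>i<n. (\<Sum>m<n. W i m * z m)\<^sup>2) \<le> \<sigma>\<^sup>2 * (\<Sum>m<n. (z m)\<^sup>2)"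
proof -
  obtain u s p where orth: "\<forall>k<n. \<forall>l<n. (\<Sum>m<n. u k m * u l m) = (if k = l then 1 else 0)"
    and sp: "\<forall>k<n. 0 \<le> s k \<and>
         (\<forall>i<n. (\<Sum>j<n. (\<Sum>m<n. W m i * W m j) * u k j) = (s k)\<^sup>2 * u k i)"
    and pn: "p < n" and smax: "\<forall>k<n. s k \<le> s p" and sig: "\<sigma> = Max (s ` ({..<n} - {p}))"
    using ssv unfolding second_singular_value_def by blast
  define M where "M = (\<lambda>i j. \<Sum>m<n. W m i * W m j)"
  have Msym: "M i j = M j i" for i j unfolding M_def by (simp add: mult.commute)
  have eig: "\<And>k i. k < n \<Longrightarrow> i < n \<Longrightarrow> (\<Sum>j<n. M i j * u k j) = (s k)\<^sup>2 * u k i"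
    using sp unfolding M_def by blast
  have comp: "\<And>i j. i < n \<Longrightarrow> j < n \<Longrightarrow> (\<Sum>k<n. u k i * u k j) = (if i = j then 1 else 0)"
    using orth_complete[OF orth] by blast
  define c where "c = (\<lambda>y k. \<Sum>i<n. u k i * y i)"
  have expand: "\<And>y i. i < n \<Longrightarrow> y i = (\<Sum>k<n. c y k * u k i)"
  proof -
    fix y :: "nat \<Rightarrow> real" and i assume i: "i < n"
    have "(\<Sum>k<n. c y k * u k i) = (\<Sum>k<n. \<Sum>j<n. u k j * y j * u k i)"
      unfolding c_def by (simp add: sum_distrib_right)
    also have "\<dots> = (\<Sum>j<n. y j * (\<Sum>k<n. u k j * u k i))"
      by (subst sum.swap) (simp add: sum_distrib_left mult_ac)
    also have "\<dots> = (\<Sum>j<n. y j * (if j = i then 1 else 0))"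
      by (rule sum.cong) (auto simp: comp i)
    also have "\<dots> = y i" using i by (simp add: if_distrib cong: if_cong)
    finally show "y i = (\<Sum>k<n. c y k * u k i)" by simp
  qed
  have parseval: "\<And>y. (\<Sum>i<n. (y i)\<^sup>2) = (\<Sum>k<n. (c y k)\<^sup>2)"
  proof -
    fix y :: "nat \<Rightarrow> real"
    have "(\<Sum>k<n. (c y k)\<^sup>2) = (\<Sum>k<n. c y k * (\<Sum>i<n. u k i * y i))"
      unfolding c_def by (simp add: power2_eq_square)
    also have "\<dots> = (\<Sum>i<n. y i * (\<Sum>k<n. c y k * u k i))"
      by (simp add: sum_distrib_left sum_distrib_right mult_ac) (subst sum.swap, simp)
    also have "\<dots> = (\<Sum>i<n. (y i)\<^sup>2)"
      by (rule sum.cong) (auto simp: expand[symmetric] power2_eq_square)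
    finally show "(\<Sum>i<n. (y i)\<^sup>2) = (\<Sum>k<n. (c y k)\<^sup>2)" by simp
  qed
  have quad: "(\<Sum>i<n. (\<Sum>m<n. W i m * z m)\<^sup>2) = (\<Sum>k<n. (s k)\<^sup>2 * (c z k)\<^sup>2)"
  proof -
    have "(\<Sum>i<n. (\<Sum>m<n. W i m * z m)\<^sup>2) = (\<Sum>i<n. \<Sum>a<n. \<Sum>b<n. W i a * W i b * z a * z b)"
      by (simp add: power2_eq_square sum_product mult_ac)
    also have "\<dots> = (\<Sum>a<n. \<Sum>i<n. \<Sum>b<n. W i a * W i b * z a * z b)"
      by (rule sum.swap)
    also have "\<dots> = (\<Sum>a<n. \<Sum>b<n. \<Sum>i<n. W i a * W i b * z a * z b)"
      by (rule sum.cong[OF refl], rule sum.swap)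
    also have "\<dots> = (\<Sum>a<n. z a * (\<Sum>b<n. M a b * z b))"
      unfolding M_def by (simp add: sum_distrib_left sum_distrib_right mult_ac)
    also have "\<dots> = (\<Sum>a<n. z a * (\<Sum>k<n. c z k * (s k)\<^sup>2 * u k a))"
    proof (rule sum.cong[OF refl])
      fix a assume a: "a \<in> {..<n}"
      have "(\<Sum>b<n. M a b * z b) = (\<Sum>b<n. M a b * (\<Sum>k<n. c z k * u k b))"
        by (rule sum.cong) (auto simp: expand[symmetric])
      also have "\<dots> = (\<Sum>k<n. c z k * (\<Sum>b<n. M a b * u k b))"
        by (simp add: sum_distrib_left mult_ac) (subst sum.swap, simp)
      also have "\<dots> = (\<Sum>k<n. c z k * (s k)\<^sup>2 * u k a)"
        by (rule sum.cong) (use a eig in auto)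
      finally show "z a * (\<Sum>b<n. M a b * z b) = z a * (\<Sum>k<n. c z k * (s k)\<^sup>2 * u k a)" by simp
    qed
    also have "\<dots> = (\<Sum>k<n. c z k * (s k)\<^sup>2 * (\<Sum>a<n. u k a * z a))"
      by (simp add: sum_distrib_left mult_ac) (subst sum.swap, simp)
    also have "\<dots> = (\<Sum>k<n. (s k)\<^sup>2 * (c z k)\<^sup>2)"
      unfolding c_def by (simp add: power2_eq_square mult_ac)
    finally show ?thesis .
  qed
  define one :: "nat \<Rightarrow> real" where "one = (\<lambda>i. 1)"
  have rows: "\<And>i. i < n \<Longrightarrow> (\<Sum>j<n. W i j) = 1" and cols: "\<And>j. j < n \<Longrightarrow> (\<Sum>i<n. W i j) = 1"
    using ds unfolding doubly_stochastic_def by auto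
  have Mone: "\<And>i. i < n \<Longrightarrow> (\<Sum>j<n. M i j) = 1"
  proof -
    fix i assume i: "i < n"
    have "(\<Sum>j<n. M i j) = (\<Sum>m<n. W m i * (\<Sum>j<n. W m j))"
      unfolding M_def by (subst sum.swap) (simp add: sum_distrib_left)
    also have "\<dots> = (\<Sum>m<n. W m i)" by (rule sum.cong) (auto simp: rows)
    also have "\<dots> = 1" using cols i by simp
    finally show "(\<Sum>j<n. M i j) = 1" .
  qed
  have coef: "\<And>k. k < n \<Longrightarrow> c one k = (s k)\<^sup>2 * c one k"
  proof -
    fix k assume k: "k < n"
    have "c one k = (\<Sum>i<n. u k i * (\<Sum>j<n. M i j))"
      unfolding c_def one_def by (rule sum.cong) (auto simp: Mone)
    also have "\<dots> = (\<Sum>i<n. \<Sum>j<n. M i j * u k i)"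
      by (simp add: sum_distrib_left mult_ac)
    also have "\<dots> = (\<Sum>j<n. \<Sum>i<n. M i j * u k i)" by (rule sum.swap)
    also have "\<dots> = (\<Sum>j<n. \<Sum>i<n. M j i * u k i)" by (simp add: Msym)
    also have "\<dots> = (\<Sum>j<n. (s k)\<^sup>2 * u k j)" by (rule sum.cong) (auto simp: eig k)
    also have "\<dots> = (s k)\<^sup>2 * c one k" unfolding c_def one_def by (simp add: sum_distrib_left)
    finally show "c one k = (s k)\<^sup>2 * c one k" .
  qed
  have fin: "finite (s ` ({..<n} - {p}))" by simp
  have sle: "\<And>k. k < n \<Longrightarrow> k \<noteq> p \<Longrightarrow> s k \<le> \<sigma>"
    unfolding sig by (rule Max_ge[OF fin]) auto
  have c0: "\<And>k. k < n \<Longrightarrow> k \<noteq> p \<Longrightarrow> c one k = 0"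
  proof -
    fix k assume k: "k < n" "k \<noteq> p"
    have "0 \<le> s k" using sp k by blast
    moreover have "s k < 1" using sle[OF k] s1 by simp
    ultimately have "(s k)\<^sup>2 < 1" by (simp add: power_less_one_iff abs_less_iff)
    thus "c one k = 0" using coef[OF k(1)] by (metis mult_cancel_right2 not_less_iff_gr_or_eq)
  qed
  have onep: "\<And>i. i < n \<Longrightarrow> 1 = c one p * u p i"
  proof -
    fix i assume i: "i < n"
    have "one i = (\<Sum>k<n. c one k * u k i)" by (rule expand[OF i])
    also have "\<dots> = (\<Sum>k\<in>{p}. c one k * u k i)"
      by (rule sum.mono_neutral_right) (use pn c0 in auto)
    finally show "1 = c one p * u p i" unfolding one_def by simp
  qed
  have cp: "c z p = 0"
  proof -
    have "0 = (\<Sum>i<n. z i)" using z0 by simp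
    also have "\<dots> = (\<Sum>i<n. c one p * u p i * z i)" by (rule sum.cong) (auto simp: onep[symmetric])
    also have "\<dots> = c one p * c z p" unfolding c_def by (simp add: sum_distrib_left mult_ac)
    finally have "c one p * c z p = 0" by simp
    moreover have "c one p \<noteq> 0" using onep[of 0] n2 by auto
    ultimately show ?thesis by simp
  qed
  have "(\<Sum>k<n. (s k)\<^sup>2 * (c z k)\<^sup>2) \<le> (\<Sum>k<n. \<sigma>\<^sup>2 * (c z k)\<^sup>2)"
  proof (rule sum_mono)
    fix k assume k: "k \<in> {..<n}"
    show "(s k)\<^sup>2 * (c z k)\<^sup>2 \<le> \<sigma>\<^sup>2 * (c z k)\<^sup>2"
    proof (cases "k = p")
      case True thus ?thesis using cp by simp
    next
      case False
      have "0 \<le> s k" using sp k by blast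
      hence "(s k)\<^sup>2 \<le> \<sigma>\<^sup>2" using sle[of k] k False by (intro power_mono) auto
      thus ?thesis by (intro mult_right_mono) auto
    qed
  qed
  also have "\<dots> = \<sigma>\<^sup>2 * (\<Sum>k<n. (c z k)\<^sup>2)" by (simp add: sum_distrib_left)
  also have "\<dots> = \<sigma>\<^sup>2 * (\<Sum>m<n. (z m)\<^sup>2)" using parseval[of z] by simp
  finally show ?thesis using quad by simp
qed




lemma cvx_sum:
  fixes N :: nat and w :: "nat \<Rightarrow> real" and q :: "nat \<Rightarrow> nat \<Rightarrow> real"
  assumes cv: "cvx_set d S"
  shows "(\<forall>m<N. q m \<in> S) \<Longrightarrow> (\<forall>m<N. 0 \<le> w m) \<Longrightarrow> (\<Sum>m<N. w m) = 1 \<Longrightarrow>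
    (\<lambda>j. \<Sum>m<N. w m * q m j) \<in> S"
proof (induction N arbitrary: w)
  case 0 thus ?case by simp
next
  case (Suc N)
  let ?a = "w N"
  have a0: "0 \<le> ?a" using Suc.prems by simp
  have rest0: "0 \<le> (\<Sum>m<N. w m)" using Suc.prems by (intro sum_nonneg) auto
  have sumeq: "(\<Sum>m<N. w m) = 1 - ?a" using Suc.prems(3) by simp
  show ?case
  proof (cases "?a = 1")
    case True
    hence "(\<Sum>m<N. w m) = 0" using sumeq by simp
    hence wz: "\<forall>m<N. w m = 0" using Suc.prems(2) by (subst (asm) sum_nonneg_eq_0_iff) auto
    have "(\<lambda>j. \<Sum>m<Suc N. w m * q m j) = q N" using wz True by (auto simp: fun_eq_iff)
    thus ?thesis using Suc.prems by simp
  next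
    case False
    hence a1: "?a < 1" using sumeq rest0 by simp
    define w' where "w' = (\<lambda>m. w m / (1 - ?a))"
    have "(\<lambda>j. \<Sum>m<N. w' m * q m j) \<in> S"
    proof (rule Suc.IH)
      show "\<forall>m<N. q m \<in> S" using Suc.prems by simp
      show "\<forall>m<N. 0 \<le> w' m" using Suc.prems a1 unfolding w'_def by simp
      show "(\<Sum>m<N. w' m) = 1" using sumeq a1 unfolding w'_def by (simp add: sum_divide_distrib[symmetric])
    qed
    from cvx_comb_mem[OF cv _ this a0] have "(\<lambda>j. ?a * q N j + (1 - ?a) * (\<Sum>m<N. w' m * q m j)) \<in> S"
      using Suc.prems a1 by simp
    moreover have "(\<lambda>j. ?a * q N j + (1 - ?a) * (\<Sum>m<N. w' m * q m j)) = (\<lambda>j. \<Sum>m<Suc N. w m * q m j)"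
      using a1 unfolding w'_def by (auto simp: fun_eq_iff sum_distrib_left)
    ultimately show ?thesis by simp
  qed
qed

lemma jensen_sq:
  fixes w b :: "nat \<Rightarrow> real"
  assumes w0: "\<forall>m<N. 0 \<le> w m" and w1: "(\<Sum>m<N. w m) = 1"
  shows "(\<Sum>m<N. w m * b m)\<^sup>2 \<le> (\<Sum>m<N. w m * (b m)\<^sup>2)"
proof -
  define B where "B = (\<Sum>m<N. w m * b m)"
  have "0 \<le> (\<Sum>m<N. w m * (b m - B)\<^sup>2)" using w0 by (intro sum_nonneg) auto
  also have "\<dots> = (\<Sum>m<N. w m * (b m)\<^sup>2) - 2 * B * (\<Sum>m<N. w m * b m) + B\<^sup>2 * (\<Sum>m<N. w m)"
    by (simp add: power2_diff algebra_simps sum.distrib sum_subtractf sum_distrib_left sum_distrib_right)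
  also have "\<dots> = (\<Sum>m<N. w m * (b m)\<^sup>2) - B\<^sup>2" using w1 unfolding B_def by (simp add: power2_eq_square)
  finally show ?thesis unfolding B_def by simp
qed

definition Sg :: "real \<Rightarrow> (nat \<Rightarrow> real) \<Rightarrow> nat \<Rightarrow> real" where
  "Sg \<sigma> \<alpha> k = (\<Sum>s\<in>{1..<k}. \<sigma> ^ (k - s) * \<alpha> s)"

lemma Sg_Suc: "1 \<le> k \<Longrightarrow> Sg \<sigma> \<alpha> (Suc k) = \<sigma> * (Sg \<sigma> \<alpha> k + \<alpha> k)"
proof -
  assume k: "1 \<le> k"
  have "Sg \<sigma> \<alpha> (Suc k) = (\<Sum>s\<in>{1..<k}. \<sigma> ^ (Suc k - s) * \<alpha> s) + \<sigma> ^ (Suc k - k) * \<alpha> k"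
    unfolding Sg_def using k by (simp add: sum.atLeastLessThan_Suc)
  also have "(\<Sum>s\<in>{1..<k}. \<sigma> ^ (Suc k - s) * \<alpha> s) = \<sigma> * (\<Sum>s\<in>{1..<k}. \<sigma> ^ (k - s) * \<alpha> s)"
    unfolding sum_distrib_left by (rule sum.cong) (auto simp: Suc_diff_le)
  finally show ?thesis unfolding Sg_def by (simp add: algebra_simps)
qed

lemma Sg_1: "Sg \<sigma> \<alpha> 1 = 0" unfolding Sg_def by simp

context
  fixes n d f L \<Omega> D W \<sigma> \<alpha> Ca Ca' x g xs
  assumes setting: "dsgd_setting n d f L \<Omega> D W \<sigma> \<alpha> Ca Ca' x g xs"
begin

lemmas setting' = setting[unfolded dsgd_setting_def]

lemma n2: "2 \<le> n" using setting' by (elim conjE) assumption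
lemma cvf0: "\<forall>i<n. cvx_fun d (f i)" using setting' by (elim conjE) assumption
lemma cvf: "i < n \<Longrightarrow> cvx_fun d (f i)" using cvf0 by blast
lemma Lb': "i < n \<Longrightarrow> \<forall>y\<in>Rd d. \<forall>v. subgrad d (f i) y v \<longrightarrow> enorm d v \<le> L"
proof -
  have "\<forall>i<n. \<forall>y\<in>Rd d. \<forall>v. subgrad d (f i) y v \<longrightarrow> enorm d v \<le> L"
    using setting' by (elim conjE) assumption
  thus "i < n \<Longrightarrow> \<forall>y\<in>Rd d. \<forall>v. subgrad d (f i) y v \<longrightarrow> enorm d v \<le> L" by blast
qed
lemma Lb: "i < n \<Longrightarrow> y \<in> Rd d \<Longrightarrow> subgrad d (f i) y v \<Longrightarrow> enorm d v \<le> L"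
  using Lb' by blast
lemma cvO: "cvx_set d \<Omega>" using setting' by (elim conjE) assumption
lemma clO: "closed_set d \<Omega>" using setting' by (elim conjE) assumption
lemma diam0: "\<forall>y\<in>\<Omega>. \<forall>z\<in>\<Omega>. enorm d (vdiff y z) \<le> D" using setting' by (elim conjE) assumption
lemma diam: "y \<in> \<Omega> \<Longrightarrow> z \<in> \<Omega> \<Longrightarrow> enorm d (vdiff y z) \<le> D" using diam0 by blast
lemma xsO: "xs \<in> \<Omega>" using setting' by (elim conjE) assumption
lemma ds: "doubly_stochastic n W" using setting' by (elim conjE) assumption
lemma ssv: "second_singular_value n W \<sigma>" using setting' by (elim conjE) assumption
lemma s1: "\<sigma> < 1" using setting' by (elim conjE) assumption
lemma apos0: "\<forall>k\<ge>1. 0 < \<alpha> k" using setting' by (elim conjE) assumption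
lemma apos: "1 \<le> k \<Longrightarrow> 0 < \<alpha> k" using apos0 by blast
lemma amono0: "\<forall>k\<ge>1. \<alpha> (Suc k) \<le> \<alpha> k" using setting' by (elim conjE) assumption
lemma init: "\<exists>x0\<in>\<Omega>. \<forall>i<n. x 1 i = x0" using setting' by (elim conjE) assumption
lemma sg0: "\<forall>t\<ge>1. \<forall>i<n. subgrad d (f i) (x t i) (g t i)" using setting' by (elim conjE) assumption
lemma sg: "1 \<le> t \<Longrightarrow> i < n \<Longrightarrow> subgrad d (f i) (x t i) (g t i)" using sg0 by blast
lemma upd0: "\<forall>t\<ge>1. \<forall>i<n. x (Suc t) i =
        (\<lambda>j. \<Sum>m<n. W i m * proj d \<Omega> (vdiff (x t m) (vscale (\<alpha> t) (g t m))) j)"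
  using setting' by (elim conjE) assumption
lemma upd: "1 \<le> t \<Longrightarrow> i < n \<Longrightarrow> x (Suc t) i =
        (\<lambda>j. \<Sum>m<n. W i m * proj d \<Omega> (vdiff (x t m) (vscale (\<alpha> t) (g t m))) j)"
  using upd0 by blast

lemma W0: "i < n \<Longrightarrow> j < n \<Longrightarrow> 0 \<le> W i j" using ds unfolding doubly_stochastic_def by blast
lemma Wrow: "i < n \<Longrightarrow> (\<Sum>j<n. W i j) = 1" using ds unfolding doubly_stochastic_def by blast
lemma Wcol: "j < n \<Longrightarrow> (\<Sum>i<n. W i j) = 1" using ds unfolding doubly_stochastic_def by blast

lemma ORd: "\<Omega> \<subseteq> Rd d" using cvO unfolding cvx_set_def by blast
lemma One: "\<Omega> \<noteq> {}" using xsO by blast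

definition "Y k m = proj d \<Omega> (vdiff (x k m) (vscale (\<alpha> k) (g k m)))"

lemma YO: "Y k m \<in> \<Omega>" unfolding Y_def by (rule proj_props(1)[OF cvO clO One])

lemma upd': "1 \<le> t \<Longrightarrow> i < n \<Longrightarrow> x (Suc t) i = (\<lambda>j. \<Sum>m<n. W i m * Y t m j)"
  unfolding Y_def by (rule upd)

lemma xO_Suc: "\<forall>i<n. x (Suc k) i \<in> \<Omega>"
proof (induction k)
  case 0 thus ?case using init by auto
next
  case (Suc k)
  show ?case
  proof (intro allI impI)
    fix i assume i: "i < n"
    have "(\<lambda>j. \<Sum>m<n. W i m * Y (Suc k) m j) \<in> \<Omega>"
      by (rule cvx_sum[OF cvO]) (use YO W0 Wrow i in auto)
    thus "x (Suc (Suc k)) i \<in> \<Omega>" using upd'[of "Suc k" i] i by simp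
  qed
qed

lemma xO: "1 \<le> k \<Longrightarrow> i < n \<Longrightarrow> x k i \<in> \<Omega>"
  using xO_Suc[of "k - 1"] by simp

lemma xR: "1 \<le> k \<Longrightarrow> i < n \<Longrightarrow> x k i \<in> Rd d"
  using xO ORd by blast

lemma xbarO: "1 \<le> k \<Longrightarrow> xbar n x k \<in> \<Omega>"
proof -
  assume k: "1 \<le> k"
  have "(\<lambda>j. \<Sum>m<n. (1 / real n) * x k m j) \<in> \<Omega>"
    by (rule cvx_sum[OF cvO]) (use xO[OF k] n2 in auto)
  thus ?thesis unfolding xbar_def by (simp add: sum_distrib_left)
qed

lemma xbarR: "1 \<le> k \<Longrightarrow> xbar n x k \<in> Rd d" using xbarO ORd by blast

lemma L0: "0 \<le> L"
proof -
  have "enorm d (g 1 0) \<le> L" using Lb[OF _ xR sg] n2 by auto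
  thus ?thesis using enorm_ge0 order_trans by blast
qed

lemma nsq_step: "nsq d (vdiff (vdiff u (vscale a v)) u) = a\<^sup>2 * nsq d v"
  unfolding nsq_def vdiff_def vscale_def by (simp add: power_mult_distrib sum_distrib_left)

lemma gR: "1 \<le> k \<Longrightarrow> m < n \<Longrightarrow> g k m \<in> Rd d"
  using sg unfolding subgrad_def by blast

lemma gL: "1 \<le> k \<Longrightarrow> m < n \<Longrightarrow> enorm d (g k m) \<le> L"
  using Lb[OF _ xR sg] by blast

lemma gL2: "1 \<le> k \<Longrightarrow> m < n \<Longrightarrow> nsq d (g k m) \<le> L\<^sup>2"
proof -
  assume k: "1 \<le> k" and m: "m < n"
  have "(enorm d (g k m))\<^sup>2 \<le> L\<^sup>2" using gL[OF k m] enorm_ge0 by (intro power_mono) auto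
  thus ?thesis by (simp add: enorm_sq)
qed

lemma Y_close: "1 \<le> k \<Longrightarrow> m < n \<Longrightarrow> nsq d (vdiff (Y k m) (x k m)) \<le> (\<alpha> k * L)\<^sup>2"
proof -
  assume k: "1 \<le> k" and m: "m < n"
  have "enorm d (vdiff (Y k m) (x k m)) \<le> enorm d (vdiff (vdiff (x k m) (vscale (\<alpha> k) (g k m))) (x k m))"
    unfolding Y_def by (rule proj_props(2)[OF cvO clO One xO[OF k m]])
  hence "nsq d (vdiff (Y k m) (x k m)) \<le> (\<alpha> k)\<^sup>2 * nsq d (g k m)"
    by (simp add: nsq_le_iff nsq_step)
  also have "\<dots> \<le> (\<alpha> k)\<^sup>2 * L\<^sup>2" using gL2[OF k m] by (intro mult_left_mono) auto
  finally show ?thesis by (simp add: power_mult_distrib)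
qed

lemma Y_desc: "1 \<le> k \<Longrightarrow> m < n \<Longrightarrow> nsq d (vdiff (Y k m) xs) \<le>
    nsq d (vdiff (x k m) xs) - 2 * \<alpha> k * ip d (g k m) (vdiff (x k m) xs) + (\<alpha> k)\<^sup>2 * L\<^sup>2"
proof -
  assume k: "1 \<le> k" and m: "m < n"
  have "enorm d (vdiff (Y k m) xs) \<le> enorm d (vdiff (vdiff (x k m) (vscale (\<alpha> k) (g k m))) xs)"
    unfolding Y_def by (rule proj_props(2)[OF cvO clO One xsO])
  hence "nsq d (vdiff (Y k m) xs) \<le> nsq d (vdiff (vdiff (x k m) (vscale (\<alpha> k) (g k m))) xs)"
    by (simp add: nsq_le_iff)
  also have "vdiff (vdiff (x k m) (vscale (\<alpha> k) (g k m))) xs = (\<lambda>j. vdiff (x k m) xs j - vscale (\<alpha> k) (g k m) j)"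
    unfolding vdiff_def by auto
  also have "nsq d \<dots> = nsq d (vdiff (x k m) xs) - 2 * ip d (vdiff (x k m) xs) (vscale (\<alpha> k) (g k m))
      + nsq d (vscale (\<alpha> k) (g k m))" by (rule nsq_expand)
  also have "ip d (vdiff (x k m) xs) (vscale (\<alpha> k) (g k m)) = \<alpha> k * ip d (g k m) (vdiff (x k m) xs)"
    unfolding vscale_def by (simp add: ip_sym[of d "vdiff (x k m) xs"] ip_scale_left)
  also have "nsq d (vscale (\<alpha> k) (g k m)) = (\<alpha> k)\<^sup>2 * nsq d (g k m)"
    unfolding nsq_def vscale_def by (simp add: power_mult_distrib sum_distrib_left)
  also have "\<dots> \<le> (\<alpha> k)\<^sup>2 * L\<^sup>2" using gL2[OF k m] by (intro mult_left_mono) auto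
  finally show ?thesis by simp
qed

definition "V k = (1 / real n) * (\<Sum>i<n. nsq d (vdiff (x k i) xs))"

lemma V0: "0 \<le> V k" unfolding V_def by (simp add: sum_nonneg nsq_ge0)

lemma VD: "1 \<le> k \<Longrightarrow> V k \<le> D\<^sup>2"
proof -
  assume k: "1 \<le> k"
  have "nsq d (vdiff (x k i) xs) \<le> D\<^sup>2" if i: "i < n" for i
  proof -
    have "enorm d (vdiff (x k i) xs) \<le> D" by (rule diam[OF xO[OF k i] xsO])
    hence "(enorm d (vdiff (x k i) xs))\<^sup>2 \<le> D\<^sup>2" using enorm_ge0 by (intro power_mono) auto
    thus ?thesis by (simp add: enorm_sq)
  qed
  hence "(\<Sum>i<n. nsq d (vdiff (x k i) xs)) \<le> real n * D\<^sup>2"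
    using sum_mono[of "{..<n}" "\<lambda>i. nsq d (vdiff (x k i) xs)" "\<lambda>i. D\<^sup>2"] by simp
  thus ?thesis unfolding V_def using n2 by (simp add: field_simps)
qed

lemma step1: "1 \<le> k \<Longrightarrow> i < n \<Longrightarrow>
   nsq d (vdiff (x (Suc k) i) xs) \<le> (\<Sum>m<n. W i m * nsq d (vdiff (Y k m) xs))"
proof -
  assume k: "1 \<le> k" and i: "i < n"
  have "nsq d (vdiff (x (Suc k) i) xs) = (\<Sum>j<d. (\<Sum>m<n. W i m * (Y k m j - xs j))\<^sup>2)"
  proof -
    have "x (Suc k) i j - xs j = (\<Sum>m<n. W i m * (Y k m j - xs j))" for j
    proof -
      have "(\<Sum>m<n. W i m * (Y k m j - xs j)) = (\<Sum>m<n. W i m * Y k m j) - (\<Sum>m<n. W i m) * xs j"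
        by (simp add: algebra_simps sum_subtractf sum_distrib_right sum_distrib_left)
      thus ?thesis using upd'[OF k i] Wrow[OF i] by simp
    qed
    thus ?thesis unfolding nsq_def vdiff_def by simp
  qed
  also have "\<dots> \<le> (\<Sum>j<d. \<Sum>m<n. W i m * (Y k m j - xs j)\<^sup>2)"
    by (rule sum_mono, rule jensen_sq) (use W0 Wrow i in auto)
  also have "\<dots> = (\<Sum>m<n. W i m * nsq d (vdiff (Y k m) xs))"
    unfolding nsq_def vdiff_def by (subst sum.swap) (simp add: sum_distrib_left)
  finally show ?thesis .
qed

lemma descent: "1 \<le> k \<Longrightarrow>
   V (Suc k) \<le> V k - (2 * \<alpha> k / real n) * (\<Sum>i<n. ip d (g k i) (vdiff (x k i) xs)) + (\<alpha> k)\<^sup>2 * L\<^sup>2"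
proof -
  assume k: "1 \<le> k"
  have "(\<Sum>i<n. nsq d (vdiff (x (Suc k) i) xs)) \<le> (\<Sum>i<n. \<Sum>m<n. W i m * nsq d (vdiff (Y k m) xs))"
    by (rule sum_mono) (rule step1[OF k], simp)
  also have "\<dots> = (\<Sum>m<n. (\<Sum>i<n. W i m) * nsq d (vdiff (Y k m) xs))"
    by (subst sum.swap) (simp add: sum_distrib_right)
  also have "\<dots> = (\<Sum>m<n. nsq d (vdiff (Y k m) xs))" by (rule sum.cong) (auto simp: Wcol)
  also have "\<dots> \<le> (\<Sum>m<n. nsq d (vdiff (x k m) xs) - 2 * \<alpha> k * ip d (g k m) (vdiff (x k m) xs) + (\<alpha> k)\<^sup>2 * L\<^sup>2)"
    by (rule sum_mono) (rule Y_desc[OF k], simp)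
  also have "\<dots> = (\<Sum>m<n. nsq d (vdiff (x k m) xs)) - 2 * \<alpha> k * (\<Sum>m<n. ip d (g k m) (vdiff (x k m) xs))
      + real n * ((\<alpha> k)\<^sup>2 * L\<^sup>2)"
    by (simp add: sum.distrib sum_subtractf sum_distrib_left)
  finally have H: "(\<Sum>i<n. nsq d (vdiff (x (Suc k) i) xs)) \<le> \<dots>" .
  have n0: "0 < real n" using n2 by simp
  have "V (Suc k) \<le> (1 / real n) * ((\<Sum>m<n. nsq d (vdiff (x k m) xs)) - 2 * \<alpha> k * (\<Sum>m<n. ip d (g k m) (vdiff (x k m) xs))
      + real n * ((\<alpha> k)\<^sup>2 * L\<^sup>2))"
    unfolding V_def using H n0 by (intro mult_left_mono) auto
  also have "\<dots> = V k - (2 * \<alpha> k / real n) * (\<Sum>i<n. ip d (g k i) (vdiff (x k i) xs)) + (\<alpha> k)\<^sup>2 * L\<^sup>2"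
    unfolding V_def using n0 by (simp add: field_simps)
  finally show ?thesis .
qed

lemma sig0: "0 \<le> \<sigma>"
proof -
  obtain u s p where sp: "\<forall>k<n. 0 \<le> s k \<and>
         (\<forall>i<n. (\<Sum>j<n. (\<Sum>m<n. W m i * W m j) * u k j) = (s k)\<^sup>2 * u k i)"
    and pn: "p < n" and sig: "\<sigma> = Max (s ` ({..<n} - {p}))"
    using ssv unfolding second_singular_value_def by blast
  obtain k where k: "k < n" "k \<noteq> p"
  proof (cases "p = 0")
    case True thus ?thesis using that[of 1] n2 by auto
  next
    case False thus ?thesis using that[of 0] n2 by auto
  qed
  have "s k \<le> \<sigma>" unfolding sig by (rule Max_ge) (use k in auto)
  moreover have "0 \<le> s k" using sp k by blast
  ultimately show ?thesis by simp
qed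

definition "Eg k = (\<Sum>i<n. nsq d (vdiff (x k i) (xbar n x k)))"

lemma Eg0: "0 \<le> Eg k" unfolding Eg_def by (simp add: sum_nonneg nsq_ge0)

lemma Eg1: "Eg 1 = 0"
proof -
  obtain x0 where x0': "\<forall>i<n. x 1 i = x0" using init by blast
  hence x0: "\<forall>i<n. x (Suc 0) i = x0" by simp
  have xb: "xbar n x 1 j = x0 j" for j
  proof -
    have "(\<Sum>i<n. x 1 i j) = (\<Sum>i<n. x0 j)" by (rule sum.cong) (auto simp: x0)
    hence "xbar n x 1 j = (1 / real n) * (\<Sum>i<n. x0 j)" unfolding xbar_def by simp
    thus ?thesis using n2 by simp
  qed
  show ?thesis unfolding Eg_def by (rule sum.neutral) (auto simp: nsq_def vdiff_def x0 xb[unfolded One_nat_def])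
qed

lemma variance_le:
  fixes e :: "nat \<Rightarrow> real"
  shows "(\<Sum>m<n. (e m - (1 / real n) * (\<Sum>l<n. e l))\<^sup>2) \<le> (\<Sum>m<n. (e m)\<^sup>2)"
proof -
  define E where "E = (1 / real n) * (\<Sum>l<n. e l)"
  have n0: "0 < real n" using n2 by simp
  have se: "(\<Sum>l<n. e l) = real n * E" unfolding E_def using n0 by simp
  have "(\<Sum>m<n. (e m - E)\<^sup>2) = (\<Sum>m<n. (e m)\<^sup>2) - 2 * E * (\<Sum>m<n. e m) + real n * E\<^sup>2"
    by (simp add: power2_diff sum.distrib sum_subtractf sum_distrib_left algebra_simps)
  also have "\<dots> = (\<Sum>m<n. (e m)\<^sup>2) - real n * E\<^sup>2" unfolding se by (simp add: power2_eq_square)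
  also have "\<dots> \<le> (\<Sum>m<n. (e m)\<^sup>2)" using n0 by simp
  finally show ?thesis unfolding E_def .
qed

lemma L2_pairs: "sqrt (\<Sum>m<n. \<Sum>j<d. (a m j)\<^sup>2) = L2_set (\<lambda>(m, j). a m j) ({..<n} \<times> {..<d})"
  unfolding L2_set_def by (simp add: sum.cartesian_product case_prod_unfold)

lemma tri_pairs: "sqrt (\<Sum>m<n. \<Sum>j<d. (a m j + b m j)\<^sup>2) \<le>
   sqrt (\<Sum>m<n. \<Sum>j<d. (a m j)\<^sup>2) + sqrt (\<Sum>m<n. \<Sum>j<d. (b m j)\<^sup>2)"
proof -
  have "L2_set (\<lambda>p. (\<lambda>(m, j). a m j) p + (\<lambda>(m, j). b m j) p) ({..<n} \<times> {..<d}) \<le>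
      L2_set (\<lambda>(m, j). a m j) ({..<n} \<times> {..<d}) + L2_set (\<lambda>(m, j). b m j) ({..<n} \<times> {..<d})"
    by (rule L2_set_triangle_ineq)
  moreover have "(\<lambda>p. (\<lambda>(m, j). a m j) p + (\<lambda>(m, j). b m j) p) = (\<lambda>(m, j). a m j + b m j)" by auto
  ultimately show ?thesis by (simp add: L2_pairs)
qed

lemma cons_step: "1 \<le> k \<Longrightarrow> sqrt (Eg (Suc k)) \<le> \<sigma> * (sqrt (Eg k) + sqrt (real n) * (\<alpha> k * L))"
proof -
  assume k: "1 \<le> k"
  define Yb where "Yb = (\<lambda>j. (1 / real n) * (\<Sum>m<n. Y k m j))"
  have n0: "0 < real n" using n2 by simp
  have xbS: "xbar n x (Suc k) j = Yb j" for j
  proof -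
    have "(\<Sum>i<n. x (Suc k) i j) = (\<Sum>i<n. \<Sum>m<n. W i m * Y k m j)"
      by (rule sum.cong) (auto simp: upd'[OF k])
    also have "\<dots> = (\<Sum>m<n. (\<Sum>i<n. W i m) * Y k m j)" by (subst sum.swap) (simp add: sum_distrib_right)
    also have "\<dots> = (\<Sum>m<n. Y k m j)" by (rule sum.cong) (auto simp: Wcol)
    finally show ?thesis unfolding xbar_def Yb_def by simp
  qed
  have dif: "i < n \<Longrightarrow> x (Suc k) i j - xbar n x (Suc k) j = (\<Sum>m<n. W i m * (Y k m j - Yb j))" for i j
  proof -
    assume i: "i < n"
    have "(\<Sum>m<n. W i m * (Y k m j - Yb j)) = (\<Sum>m<n. W i m * Y k m j) - (\<Sum>m<n. W i m) * Yb j"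
      by (simp add: algebra_simps sum_subtractf sum_distrib_right sum_distrib_left)
    thus ?thesis using upd'[OF k i] Wrow[OF i] xbS by simp
  qed
  define Q where "Q = (\<Sum>m<n. \<Sum>j<d. (Y k m j - Yb j)\<^sup>2)"
  have "Eg (Suc k) = (\<Sum>j<d. \<Sum>i<n. (\<Sum>m<n. W i m * (Y k m j - Yb j))\<^sup>2)"
    unfolding Eg_def nsq_def vdiff_def by (subst sum.swap) (rule sum.cong, auto simp: dif)
  also have "\<dots> \<le> (\<Sum>j<d. \<sigma>\<^sup>2 * (\<Sum>m<n. (Y k m j - Yb j)\<^sup>2))"
  proof (rule sum_mono)
    fix j assume "j \<in> {..<d}"
    have "(\<Sum>m<n. Y k m j - Yb j) = 0" unfolding Yb_def using n0 by (simp add: sum_subtractf)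
    thus "(\<Sum>i<n. (\<Sum>m<n. W i m * (Y k m j - Yb j))\<^sup>2) \<le> \<sigma>\<^sup>2 * (\<Sum>m<n. (Y k m j - Yb j)\<^sup>2)"
      by (rule spectral_contraction[OF ssv ds s1 n2])
  qed
  also have "\<dots> = \<sigma>\<^sup>2 * Q" unfolding Q_def by (simp add: sum_distrib_left sum.swap[of _ "{..<d}"])
  finally have E1: "Eg (Suc k) \<le> \<sigma>\<^sup>2 * Q" .
  define a where "a = (\<lambda>m j. x k m j - xbar n x k j)"
  define e where "e = (\<lambda>m j. Y k m j - x k m j)"
  define b where "b = (\<lambda>m j. e m j - (1 / real n) * (\<Sum>l<n. e l j))"
  have ab: "Y k m j - Yb j = a m j + b m j" for m j
  proof -
    have "(1 / real n) * (\<Sum>l<n. e l j) = Yb j - xbar n x k j"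
      unfolding e_def Yb_def xbar_def by (simp add: sum_subtractf right_diff_distrib)
    thus ?thesis unfolding a_def b_def e_def by simp
  qed
  have "sqrt Q \<le> sqrt (\<Sum>m<n. \<Sum>j<d. (a m j)\<^sup>2) + sqrt (\<Sum>m<n. \<Sum>j<d. (b m j)\<^sup>2)"
    unfolding Q_def ab by (rule tri_pairs)
  also have "(\<Sum>m<n. \<Sum>j<d. (a m j)\<^sup>2) = Eg k" unfolding Eg_def nsq_def vdiff_def a_def ..
  also have "sqrt (\<Sum>m<n. \<Sum>j<d. (b m j)\<^sup>2) \<le> sqrt (real n) * (\<alpha> k * L)"
  proof -
    have "(\<Sum>m<n. \<Sum>j<d. (b m j)\<^sup>2) = (\<Sum>j<d. \<Sum>m<n. (b m j)\<^sup>2)" by (rule sum.swap)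
    also have "\<dots> \<le> (\<Sum>j<d. \<Sum>m<n. (e m j)\<^sup>2)" unfolding b_def by (rule sum_mono) (rule variance_le)
    also have "\<dots> = (\<Sum>m<n. nsq d (vdiff (Y k m) (x k m)))"
      unfolding nsq_def vdiff_def e_def by (rule sum.swap)
    also have "\<dots> \<le> (\<Sum>m<n. (\<alpha> k * L)\<^sup>2)" by (rule sum_mono) (rule Y_close[OF k], simp)
    also have "\<dots> = real n * (\<alpha> k * L)\<^sup>2" by simp
    finally have "sqrt (\<Sum>m<n. \<Sum>j<d. (b m j)\<^sup>2) \<le> sqrt (real n * (\<alpha> k * L)\<^sup>2)" by simp
    also have "\<dots> = sqrt (real n) * (\<alpha> k * L)"
      using apos[OF k] L0 by (simp add: real_sqrt_mult)
    finally show ?thesis .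
  qed
  finally have Q1: "sqrt Q \<le> sqrt (Eg k) + sqrt (real n) * (\<alpha> k * L)" by simp
  have "sqrt (Eg (Suc k)) \<le> sqrt (\<sigma>\<^sup>2 * Q)" using E1 by simp
  also have "\<dots> = \<sigma> * sqrt Q" using sig0 by (simp add: real_sqrt_mult)
  also have "\<dots> \<le> \<sigma> * (sqrt (Eg k) + sqrt (real n) * (\<alpha> k * L))" using Q1 sig0 by (rule mult_left_mono)
  finally show ?thesis .
qed

lemma cons_bound: "1 \<le> k \<Longrightarrow> sqrt (Eg k) \<le> sqrt (real n) * L * Sg \<sigma> \<alpha> k"
proof (induction k rule: nat_induct_at_least)
  case base show ?case using Eg1 Sg_1 by (metis mult_zero_right real_sqrt_zero order_refl)
next
  case (Suc k)
  have "sqrt (Eg (Suc k)) \<le> \<sigma> * (sqrt (Eg k) + sqrt (real n) * (\<alpha> k * L))" by (rule cons_step[OF Suc.hyps])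
  also have "\<dots> \<le> \<sigma> * (sqrt (real n) * L * Sg \<sigma> \<alpha> k + sqrt (real n) * (\<alpha> k * L))"
    using Suc.IH sig0 by (intro mult_left_mono) auto
  also have "\<dots> = sqrt (real n) * L * Sg \<sigma> \<alpha> (Suc k)"
    using Sg_Suc[OF Suc.hyps] by (simp add: algebra_simps)
  finally show ?case .
qed

lemma avgdev: "1 \<le> k \<Longrightarrow> (1 / real n) * (\<Sum>i<n. enorm d (vdiff (x k i) (xbar n x k))) \<le> L * Sg \<sigma> \<alpha> k"
proof -
  assume k: "1 \<le> k"
  define a where "a = (\<lambda>i. enorm d (vdiff (x k i) (xbar n x k)))"
  have n0: "0 < real n" using n2 by simp
  have "(\<Sum>i<n. (1 / real n) * a i)\<^sup>2 \<le> (\<Sum>i<n. (1 / real n) * (a i)\<^sup>2)"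
    by (rule jensen_sq) (use n0 in auto)
  also have "\<dots> = Eg k / real n" unfolding a_def Eg_def by (simp add: enorm_sq sum_divide_distrib)
  finally have h: "((1 / real n) * (\<Sum>i<n. a i))\<^sup>2 \<le> Eg k / real n" by (simp add: sum_distrib_left)
  have a0: "0 \<le> (1 / real n) * (\<Sum>i<n. a i)" unfolding a_def by (simp add: sum_nonneg enorm_ge0)
  have "(1 / real n) * (\<Sum>i<n. a i) \<le> sqrt (Eg k / real n)" using h a0 by (simp add: real_le_rsqrt)
  also have "\<dots> = sqrt (Eg k) / sqrt (real n)" by (simp add: real_sqrt_divide)
  also have "\<dots> \<le> (sqrt (real n) * L * Sg \<sigma> \<alpha> k) / sqrt (real n)"
    using cons_bound[OF k] n0 by (intro divide_right_mono) auto
  also have "\<dots> = L * Sg \<sigma> \<alpha> k" using n0 by simp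
  finally show ?thesis unfolding a_def .
qed

lemma ip_neg_vdiff: "ip d h (vdiff a b) = - ip d h (vdiff b a)"
  unfolding ip_def vdiff_def by (simp add: algebra_simps sum_negf[symmetric])

lemma perstep: "1 \<le> k \<Longrightarrow>
   2 * \<alpha> k * (Favg n f (xbar n x k) - Favg n f xs) \<le>
   V k - V (Suc k) + (\<alpha> k)\<^sup>2 * L\<^sup>2 + 2 * \<alpha> k * L\<^sup>2 * Sg \<sigma> \<alpha> k"
proof -
  assume k: "1 \<le> k"
  have n0: "0 < real n" using n2 by simp
  have xsR: "xs \<in> Rd d" using xsO ORd by blast
  have each: "f i (xbar n x k) - f i xs - L * enorm d (vdiff (x k i) (xbar n x k))
      \<le> ip d (g k i) (vdiff (x k i) xs)" if i: "i < n" for i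
  proof -
    have "f i xs \<ge> f i (x k i) + ip d (g k i) (vdiff xs (x k i))"
      using sg[OF k i] xsR unfolding subgrad_def by blast
    hence A: "f i (x k i) - f i xs \<le> ip d (g k i) (vdiff (x k i) xs)"
      using ip_neg_vdiff[of "g k i" xs "x k i"] by simp
    have "f i (xbar n x k) - f i (x k i) \<le> L * enorm d (vdiff (xbar n x k) (x k i))"
      by (rule lipschitz_bound[OF cvf[OF i] xR[OF k i] xbarR[OF k] Lb'[OF i]])
    thus ?thesis using A by (simp add: enorm_vdiff_sym)
  qed
  have "(\<Sum>i<n. f i (xbar n x k) - f i xs - L * enorm d (vdiff (x k i) (xbar n x k)))
      \<le> (\<Sum>i<n. ip d (g k i) (vdiff (x k i) xs))" by (rule sum_mono) (rule each, simp)
  hence "(1 / real n) * (\<Sum>i<n. f i (xbar n x k) - f i xs - L * enorm d (vdiff (x k i) (xbar n x k)))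
      \<le> (1 / real n) * (\<Sum>i<n. ip d (g k i) (vdiff (x k i) xs))" using n0 by (intro mult_left_mono) auto
  hence B: "Favg n f (xbar n x k) - Favg n f xs - L * ((1 / real n) * (\<Sum>i<n. enorm d (vdiff (x k i) (xbar n x k))))
      \<le> (1 / real n) * (\<Sum>i<n. ip d (g k i) (vdiff (x k i) xs))"
    unfolding Favg_def by (simp add: sum_subtractf sum_distrib_left right_diff_distrib mult_ac)
  have C: "L * ((1 / real n) * (\<Sum>i<n. enorm d (vdiff (x k i) (xbar n x k)))) \<le> L * (L * Sg \<sigma> \<alpha> k)"
    using avgdev[OF k] L0 by (intro mult_left_mono) auto
  have D: "V (Suc k) \<le> V k - 2 * \<alpha> k * ((1 / real n) * (\<Sum>i<n. ip d (g k i) (vdiff (x k i) xs))) + (\<alpha> k)\<^sup>2 * L\<^sup>2"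
    using descent[OF k] by simp
  have "Favg n f (xbar n x k) - Favg n f xs \<le> (1 / real n) * (\<Sum>i<n. ip d (g k i) (vdiff (x k i) xs)) + L\<^sup>2 * Sg \<sigma> \<alpha> k"
    using B C by (simp add: power2_eq_square mult_ac)
  hence "2 * \<alpha> k * (Favg n f (xbar n x k) - Favg n f xs) \<le>
      2 * \<alpha> k * ((1 / real n) * (\<Sum>i<n. ip d (g k i) (vdiff (x k i) xs)) + L\<^sup>2 * Sg \<sigma> \<alpha> k)"
    using apos[OF k] by (intro mult_left_mono) auto
  thus ?thesis using D by (simp add: algebra_simps)
qed

lemma sum_steps: "2 \<le> t \<Longrightarrow>
   2 * (\<Sum>k=t div 2..t. \<alpha> k * (Favg n f (xbar n x k) - Favg n f xs)) \<le>
   D\<^sup>2 + L\<^sup>2 * (\<Sum>k=t div 2..t. (\<alpha> k)\<^sup>2) + 2 * L\<^sup>2 * (\<Sum>k=t div 2..t. \<alpha> k * Sg \<sigma> \<alpha> k)"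
proof -
  assume t: "2 \<le> t"
  have t1: "1 \<le> t div 2" using t by simp
  have "2 * (\<Sum>k=t div 2..t. \<alpha> k * (Favg n f (xbar n x k) - Favg n f xs))
      = (\<Sum>k=t div 2..t. 2 * \<alpha> k * (Favg n f (xbar n x k) - Favg n f xs))"
    by (simp add: sum_distrib_left mult.assoc)
  also have "\<dots> \<le> (\<Sum>k=t div 2..t. (V k - V (Suc k)) + ((\<alpha> k)\<^sup>2 * L\<^sup>2 + 2 * \<alpha> k * L\<^sup>2 * Sg \<sigma> \<alpha> k))"
    by (rule sum_mono) (use perstep t1 in \<open>auto simp: add.assoc\<close>)
  also have "\<dots> = (\<Sum>k=t div 2..t. V k - V (Suc k)) + L\<^sup>2 * (\<Sum>k=t div 2..t. (\<alpha> k)\<^sup>2)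
      + 2 * L\<^sup>2 * (\<Sum>k=t div 2..t. \<alpha> k * Sg \<sigma> \<alpha> k)"
    by (simp add: sum.distrib sum_distrib_left mult_ac add.assoc)
  also have "(\<Sum>k=t div 2..t. V k - V (Suc k)) = V (t div 2) - V (Suc t)"
  proof -
    have "(\<Sum>k=t div 2..t. V (Suc k) - V k) = V (Suc t) - V (t div 2)"
      by (rule sum_Suc_diff) simp
    thus ?thesis by (simp add: sum_subtractf)
  qed
  also have "\<dots> \<le> D\<^sup>2" using VD[OF t1] V0[of "Suc t"] by simp
  finally show ?thesis by simp
qed

lemma xalphaR: "2 \<le> t \<Longrightarrow> xalpha n \<alpha> x t \<in> Rd d"
proof -
  assume t: "2 \<le> t"
  have "xbar n x k j = 0" if "k \<in> {t div 2..t}" "d \<le> j" for k j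
  proof -
    have k: "1 \<le> k" using that t by auto
    have "x k i j = 0" if "i < n" for i using xR[OF k that] \<open>d \<le> j\<close> unfolding Rd_def by blast
    thus ?thesis unfolding xbar_def by simp
  qed
  thus ?thesis unfolding Rd_def xalpha_def by auto
qed

lemma jensen_xalpha: "2 \<le> t \<Longrightarrow>
   (\<Sum>k=t div 2..t. \<alpha> k) * Favg n f (xalpha n \<alpha> x t) \<le> (\<Sum>k=t div 2..t. \<alpha> k * Favg n f (xbar n x k))"
proof -
  assume t: "2 \<le> t"
  define K where "K = {t div 2..t}"
  define A where "A = (\<Sum>k\<in>K. \<alpha> k)"
  define xa where "xa = xalpha n \<alpha> x t"
  have Kpos: "k \<in> K \<Longrightarrow> 1 \<le> k" for k using t unfolding K_def by auto
  have A0: "0 < A" unfolding A_def K_def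
    by (rule sum_pos) (use t apos in auto)
  have xaR: "xa \<in> Rd d" unfolding xa_def by (rule xalphaR[OF t])
  have xaj: "A * xa j = (\<Sum>k\<in>K. \<alpha> k * xbar n x k j)" for j
    unfolding xa_def xalpha_def A_def K_def using A0 unfolding A_def K_def by simp
  have each: "A * f i xa \<le> (\<Sum>k\<in>K. \<alpha> k * f i (xbar n x k))" if i: "i < n" for i
  proof -
    obtain h where h: "subgrad d (f i) xa h" using subgrad_exists[OF cvf[OF i] xaR] by blast
    have "(\<Sum>k\<in>K. \<alpha> k * (f i xa + ip d h (vdiff (xbar n x k) xa))) \<le> (\<Sum>k\<in>K. \<alpha> k * f i (xbar n x k))"
    proof (rule sum_mono)
      fix k assume k: "k \<in> K"
      have "f i (xbar n x k) \<ge> f i xa + ip d h (vdiff (xbar n x k) xa)"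
        using h xbarR[OF Kpos[OF k]] unfolding subgrad_def by blast
      thus "\<alpha> k * (f i xa + ip d h (vdiff (xbar n x k) xa)) \<le> \<alpha> k * f i (xbar n x k)"
        using apos[OF Kpos[OF k]] by (intro mult_left_mono) auto
    qed
    moreover have "(\<Sum>k\<in>K. \<alpha> k * ip d h (vdiff (xbar n x k) xa)) = 0"
    proof -
      have "(\<Sum>k\<in>K. \<alpha> k * ip d h (vdiff (xbar n x k) xa)) = (\<Sum>k\<in>K. \<Sum>j<d. h j * (\<alpha> k * (xbar n x k j - xa j)))"
        unfolding ip_def vdiff_def by (simp add: sum_distrib_left mult_ac)
      also have "\<dots> = (\<Sum>j<d. \<Sum>k\<in>K. h j * (\<alpha> k * (xbar n x k j - xa j)))" by (rule sum.swap)
      also have "\<dots> = (\<Sum>j<d. h j * (\<Sum>k\<in>K. \<alpha> k * (xbar n x k j - xa j)))" by (simp add: sum_distrib_left)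
      also have "\<dots> = 0"
      proof (rule sum.neutral, rule ballI)
        fix j
        have "(\<Sum>k\<in>K. \<alpha> k * (xbar n x k j - xa j)) = (\<Sum>k\<in>K. \<alpha> k * xbar n x k j) - A * xa j"
          unfolding A_def by (simp add: right_diff_distrib sum_subtractf sum_distrib_right)
        thus "h j * (\<Sum>k\<in>K. \<alpha> k * (xbar n x k j - xa j)) = 0" using xaj[of j] by simp
      qed
      finally show ?thesis .
    qed
    moreover have "(\<Sum>k\<in>K. \<alpha> k * (f i xa + ip d h (vdiff (xbar n x k) xa))) =
        A * f i xa + (\<Sum>k\<in>K. \<alpha> k * ip d h (vdiff (xbar n x k) xa))"
      unfolding A_def by (simp add: distrib_left sum.distrib sum_distrib_right)
    ultimately show ?thesis by simp
  qed
  have "A * Favg n f xa = (1 / real n) * (\<Sum>i<n. A * f i xa)"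
    unfolding Favg_def by (simp add: sum_distrib_left mult_ac)
  also have "\<dots> \<le> (1 / real n) * (\<Sum>i<n. \<Sum>k\<in>K. \<alpha> k * f i (xbar n x k))"
    by (intro mult_left_mono sum_mono each) auto
  also have "\<dots> = (\<Sum>k\<in>K. \<alpha> k * Favg n f (xbar n x k))"
    unfolding Favg_def by (subst sum.swap) (simp add: sum_distrib_left mult_ac)
  finally show ?thesis unfolding A_def K_def xa_def .
qed

lemma main_bound: "2 \<le> t \<Longrightarrow>
   Favg n f (xalpha n \<alpha> x t) - Favg n f xs \<le>
   (D\<^sup>2 + L\<^sup>2 * (\<Sum>k=t div 2..t. (\<alpha> k)\<^sup>2) + 2 * L\<^sup>2 * (\<Sum>k=t div 2..t. \<alpha> k * Sg \<sigma> \<alpha> k))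
     / (2 * (\<Sum>k=t div 2..t. \<alpha> k))"
proof -
  assume t: "2 \<le> t"
  define A where "A = (\<Sum>k=t div 2..t. \<alpha> k)"
  have A0: "0 < A" unfolding A_def by (rule sum_pos) (use t apos in auto)
  have "A * (Favg n f (xalpha n \<alpha> x t) - Favg n f xs) \<le>
      (\<Sum>k=t div 2..t. \<alpha> k * Favg n f (xbar n x k)) - A * Favg n f xs"
    using jensen_xalpha[OF t] unfolding A_def by (simp add: right_diff_distrib)
  also have "\<dots> = (\<Sum>k=t div 2..t. \<alpha> k * (Favg n f (xbar n x k) - Favg n f xs))"
    unfolding A_def by (simp add: right_diff_distrib sum_subtractf sum_distrib_right)
  finally have "2 * A * (Favg n f (xalpha n \<alpha> x t) - Favg n f xs) \<le>
      D\<^sup>2 + L\<^sup>2 * (\<Sum>k=t div 2..t. (\<alpha> k)\<^sup>2) + 2 * L\<^sup>2 * (\<Sum>k=t div 2..t. \<alpha> k * Sg \<sigma> \<alpha> k)"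
    using sum_steps[OF t] by (simp add: mult.assoc)
  thus ?thesis using A0 unfolding A_def by (simp add: pos_le_divide_eq mult_ac)
qed

end




lemma Sg_split:
  assumes m1: "1 \<le> m" and mk: "m \<le> k"
  shows "Sg \<sigma> \<alpha> k = \<sigma> ^ (k - m) * Sg \<sigma> \<alpha> m + (\<Sum>s\<in>{m..<k}. \<sigma> ^ (k - s) * \<alpha> s)"
proof -
  have U: "{1..<k} = {1..<m} \<union> {m..<k}" using m1 mk by auto
  have "Sg \<sigma> \<alpha> k = (\<Sum>s\<in>{1..<m}. \<sigma> ^ (k - s) * \<alpha> s) + (\<Sum>s\<in>{m..<k}. \<sigma> ^ (k - s) * \<alpha> s)"
    unfolding Sg_def U by (rule sum.union_disjoint) auto
  also have "(\<Sum>s\<in>{1..<m}. \<sigma> ^ (k - s) * \<alpha> s) = \<sigma> ^ (k - m) * Sg \<sigma> \<alpha> m"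
    unfolding Sg_def sum_distrib_left
  proof (rule sum.cong[OF refl])
    fix s assume "s \<in> {1..<m}"
    hence "k - s = (k - m) + (m - s)" using mk by auto
    thus "\<sigma> ^ (k - s) * \<alpha> s = \<sigma> ^ (k - m) * (\<sigma> ^ (m - s) * \<alpha> s)" by (simp add: power_add)
  qed
  finally show ?thesis .
qed

lemma geo_bound:
  fixes \<sigma> :: real
  assumes s0: "0 \<le> \<sigma>" and s1: "\<sigma> < 1"
  shows "(\<Sum>s\<in>{m..<k}. \<sigma> ^ (k - s)) \<le> \<sigma> / (1 - \<sigma>)"
proof (induction k)
  case 0 thus ?case using s0 s1 by simp
next
  case (Suc k)
  show ?case
  proof (cases "m \<le> k")
    case True
    have "(\<Sum>s\<in>{m..<Suc k}. \<sigma> ^ (Suc k - s)) = \<sigma> + \<sigma> * (\<Sum>s\<in>{m..<k}. \<sigma> ^ (k - s))"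
    proof -
      have "(\<Sum>s\<in>{m..<Suc k}. \<sigma> ^ (Suc k - s)) = (\<Sum>s\<in>{m..<k}. \<sigma> ^ (Suc k - s)) + \<sigma> ^ (Suc k - k)"
        using True by (simp add: sum.atLeastLessThan_Suc)
      also have "(\<Sum>s\<in>{m..<k}. \<sigma> ^ (Suc k - s)) = \<sigma> * (\<Sum>s\<in>{m..<k}. \<sigma> ^ (k - s))"
        unfolding sum_distrib_left by (rule sum.cong) (auto simp: Suc_diff_le)
      finally show ?thesis by simp
    qed
    also have "\<dots> \<le> \<sigma> + \<sigma> * (\<sigma> / (1 - \<sigma>))" using Suc.IH s0 by (intro add_left_mono mult_left_mono) auto
    also have "\<dots> = \<sigma> / (1 - \<sigma>)" using s1 by (simp add: field_simps)
    finally show ?thesis .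
  next
    case False
    hence "{m..<Suc k} = {}" by auto
    thus ?thesis using s0 s1 by simp
  qed
qed

lemma tail_bound:
  fixes \<sigma> B :: real
  assumes s0: "0 \<le> \<sigma>" and s1: "\<sigma> < 1" and B0: "0 \<le> B"
    and a: "\<And>s. s \<in> {m..<k} \<Longrightarrow> 0 \<le> \<alpha> s \<and> \<alpha> s \<le> B"
  shows "(\<Sum>s\<in>{m..<k}. \<sigma> ^ (k - s) * \<alpha> s) \<le> B / (1 - \<sigma>)"
proof -
  have "(\<Sum>s\<in>{m..<k}. \<sigma> ^ (k - s) * \<alpha> s) \<le> (\<Sum>s\<in>{m..<k}. \<sigma> ^ (k - s) * B)"
    using a s0 by (intro sum_mono mult_left_mono) auto
  also have "\<dots> = B * (\<Sum>s\<in>{m..<k}. \<sigma> ^ (k - s))" by (simp add: sum_distrib_left mult.commute)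
  also have "\<dots> \<le> B * (\<sigma> / (1 - \<sigma>))" using geo_bound[OF s0 s1] B0 by (rule mult_left_mono)
  also have "\<dots> \<le> B * (1 / (1 - \<sigma>))" using B0 s1 by (intro mult_left_mono divide_right_mono) auto
  finally show ?thesis by simp
qed

lemma Sg_le_sum:
  fixes \<sigma> :: real
  assumes s0: "0 \<le> \<sigma>" and s1: "\<sigma> \<le> 1" and a: "\<And>s. 1 \<le> s \<Longrightarrow> 0 \<le> \<alpha> s"
  shows "Sg \<sigma> \<alpha> m \<le> (\<Sum>s\<in>{1..<m}. \<alpha> s)"
  unfolding Sg_def
proof (rule sum_mono)
  fix s assume "s \<in> {1..<m}"
  hence "0 \<le> \<alpha> s" using a by auto
  moreover have "\<sigma> ^ (m - s) \<le> 1" using s0 s1 by (simp add: power_le_one)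
  ultimately show "\<sigma> ^ (m - s) * \<alpha> s \<le> \<alpha> s" using mult_right_mono[of "\<sigma> ^ (m - s)" 1 "\<alpha> s"] by simp
qed

lemma Sg_nonneg:
  fixes \<sigma> :: real
  assumes s0: "0 \<le> \<sigma>" and a: "\<And>s. 1 \<le> s \<Longrightarrow> 0 \<le> \<alpha> s"
  shows "0 \<le> Sg \<sigma> \<alpha> m"
  unfolding Sg_def using s0 a by (intro sum_nonneg) auto

lemma pow_exp:
  fixes \<sigma> :: real
  assumes "0 \<le> \<sigma>"
  shows "\<sigma> ^ j \<le> exp (- (1 - \<sigma>) * real j)"
proof -
  have "\<sigma> \<le> exp (\<sigma> - 1)" using exp_ge_add_one_self[of "\<sigma> - 1"] by simp
  hence "\<sigma> ^ j \<le> exp (\<sigma> - 1) ^ j" using assms by (intro power_mono) auto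
  also have "\<dots> = exp (real j * (\<sigma> - 1))" by (simp add: exp_of_nat_mult)
  finally show ?thesis by (simp add: algebra_simps)
qed

lemma y_le_exp: "0 \<le> (y::real) \<Longrightarrow> y \<le> exp (y / 2)"
proof -
  assume y: "0 \<le> y"
  have "1 + y / 4 \<le> exp (y / 4)" by (rule exp_ge_add_one_self)
  hence "(1 + y / 4)\<^sup>2 \<le> (exp (y / 4))\<^sup>2" using y by (intro power_mono) auto
  also have "(exp (y / 4))\<^sup>2 = exp (y / 2)" by (simp add: power2_eq_square flip: exp_add)
  finally have "(1 + y / 4)\<^sup>2 \<le> exp (y / 2)" .
  moreover have "y \<le> (1 + y / 4)\<^sup>2"
  proof -
    have "0 \<le> (1 - y / 4)\<^sup>2" by simp
    thus ?thesis by (simp add: power2_eq_square algebra_simps)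
  qed
  ultimately show ?thesis by simp
qed

lemma rearr: "(E::real) * ((y * (a / s)) / c) = (E * y) * ((1 / c) * a / s)"
  by (simp add: divide_inverse mult_ac)

lemma young_step:
  fixes a r :: real
  assumes a0: "0 \<le> a" and r0: "0 < r" and r1: "r < 1"
  shows "a powr r \<le> (a + 1) powr r - r * ((a + 1) powr r / (a + 1))"
proof (cases "a = 0")
  case True thus ?thesis using r1 by simp
next
  case False
  hence a: "0 < a" using a0 by simp
  define b where "b = a + 1"
  have b: "0 < b" unfolding b_def using a by simp
  have "(a / b) powr r * 1 powr (1 - r) \<le> r * (a / b) + (1 - r) * 1"
    by (rule Youngs_inequality_0) (use r0 r1 a b in auto)
  hence Y: "(a / b) powr r \<le> r * (a / b) + (1 - r)" by simp
  have "a powr r = b powr r * (a / b) powr r" using a b by (simp add: powr_divide)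
  also have "\<dots> \<le> b powr r * (r * (a / b) + (1 - r))" using Y by (intro mult_left_mono) auto
  also have "\<dots> = b powr r - r * (b powr r / b)"
  proof -
    have e: "r * (a / b) + (1 - r) = 1 - r * (1 / b)" unfolding b_def using a by (simp add: field_simps)
    show ?thesis unfolding e by (simp add: algebra_simps)
  qed
  finally show ?thesis unfolding b_def .
qed

lemma powsum:
  fixes \<beta> :: real
  assumes b0: "0 < \<beta>" and b1: "\<beta> < 1" and m1: "1 \<le> m"
  shows "(\<Sum>s\<in>{1..<m}. 1 / (real s powr \<beta>)) \<le> (real m - 1) powr (1 - \<beta>) / (1 - \<beta>)"
  using m1
proof (induction m rule: nat_induct_at_least)
  case base thus ?case by simp
next
  case (Suc m)
  define r where "r = 1 - \<beta>"
  have r0: "0 < r" and r1: "r < 1" using b0 b1 unfolding r_def by auto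
  have mpos: "0 < real m" using Suc.hyps by simp
  have "(\<Sum>s\<in>{1..<Suc m}. 1 / (real s powr \<beta>)) = (\<Sum>s\<in>{1..<m}. 1 / (real s powr \<beta>)) + 1 / (real m powr \<beta>)"
    using Suc.hyps by (simp add: sum.atLeastLessThan_Suc)
  also have "\<dots> \<le> (real m - 1) powr r / r + 1 / (real m powr \<beta>)" using Suc.IH unfolding r_def by simp
  also have "\<dots> \<le> real m powr r / r"
  proof -
    have "(real m - 1) powr r \<le> (real m - 1 + 1) powr r - r * ((real m - 1 + 1) powr r / (real m - 1 + 1))"
      by (rule young_step) (use Suc.hyps r0 r1 in auto)
    hence Y: "(real m - 1) powr r \<le> real m powr r - r * (real m powr r / real m)" by simp
    have "real m powr r / real m = 1 / (real m powr \<beta>)"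
    proof -
      have "real m powr r * real m powr \<beta> = real m" using mpos unfolding r_def by (simp add: powr_add[symmetric])
      thus ?thesis using mpos by (simp add: field_simps)
    qed
    hence "(real m - 1) powr r \<le> real m powr r - r * (1 / (real m powr \<beta>))" using Y by simp
    hence "(real m - 1) powr r / r \<le> (real m powr r - r * (1 / (real m powr \<beta>))) / r"
      using r0 by (intro divide_right_mono) auto
    also have "\<dots> = real m powr r / r - 1 / (real m powr \<beta>)" using r0 by (simp add: field_simps)
    finally show ?thesis by simp
  qed
  finally show ?case unfolding r_def by simp
qed

context
  fixes n d f L \<Omega> D W \<sigma> \<alpha> Ca Ca' x g xs
  assumes setting: "dsgd_setting n d f L \<Omega> D W \<sigma> \<alpha> Ca Ca' x g xs"
begin

lemmas setting2 = setting[unfolded dsgd_setting_def]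

lemma Ca_ineq: "\<forall>t\<ge>1. (\<Sum>k=1..t. \<alpha> k) \<le> Ca * (\<Sum>k=(t + 1) div 2..t. \<alpha> k)"
  using setting2 by (elim conjE) assumption
lemma Ca'_ineq: "\<forall>t\<ge>2. \<alpha> (t div 2) \<le> Ca' * \<alpha> t"
  using setting2 by (elim conjE) assumption
lemma summ: "summable (\<lambda>k. (\<alpha> (Suc k))\<^sup>2)"
  using setting2 by (elim conjE) assumption

lemma ap: "1 \<le> k \<Longrightarrow> 0 < \<alpha> k" by (rule apos[OF setting])
lemma sgm0: "0 \<le> \<sigma>" by (rule sig0[OF setting])
lemma sgm1: "\<sigma> < 1" by (rule s1[OF setting])
lemma LL0: "0 \<le> L" by (rule L0[OF setting])

lemma anti: "1 \<le> a \<Longrightarrow> a \<le> b \<Longrightarrow> \<alpha> b \<le> \<alpha> a"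
proof -
  assume a: "1 \<le> a" and ab: "a \<le> b"
  show ?thesis
    by (rule lift_Suc_antimono_le_ivl[of "{1..}"]) (use amono0[OF setting] a ab in auto)
qed

lemma sup_eq: "(SUP k\<in>{1..}. \<alpha> k) = \<alpha> 1"
  by (rule cSup_eq_maximum) (auto intro: anti)

lemma Ca'1: "1 \<le> Ca'"
proof (rule ccontr)
  assume "\<not> 1 \<le> Ca'"
  hence c: "Ca' < 1" by simp
  have "\<alpha> 1 \<le> Ca' * \<alpha> 2" using Ca'_ineq by (metis div_self le_refl zero_neq_numeral numeral_One one_add_one)
  also have "\<dots> < \<alpha> 2" using c ap[of 2] by simp
  also have "\<dots> \<le> \<alpha> 1" by (rule anti) auto
  finally show False by simp
qed

lemma D0: "0 \<le> D"
  using diam[OF setting xsO[OF setting] xsO[OF setting]] enorm_ge0 order_trans by blast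

lemma Sg_nn: "0 \<le> Sg \<sigma> \<alpha> m"
  by (rule Sg_nonneg[OF sgm0]) (use ap in \<open>auto intro: less_imp_le\<close>)

lemma Sg_part1:
  assumes t2: "2 \<le> t" and k: "k \<in> {t div 2..t}"
  shows "Sg \<sigma> \<alpha> k \<le> \<sigma> ^ (t div 2 - t div 2 div 2) * (real t * \<alpha> 1) + Ca' * \<alpha> k / (1 - \<sigma>)"
proof (cases "k = 1")
  case True
  have "0 \<le> \<sigma> ^ (t div 2 - t div 2 div 2) * (real t * \<alpha> 1)" using sgm0 ap[of 1] by simp
  moreover have "0 \<le> Ca' * \<alpha> k / (1 - \<sigma>)" using Ca'1 ap[of k] sgm1 True by simp
  ultimately show ?thesis using True Sg_1 by simp
next
  case False
  have k1: "1 \<le> k" using k t2 by auto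
  hence k2: "2 \<le> k" using False by simp
  define m where "m = k div 2"
  have m1: "1 \<le> m" and mk: "m \<le> k" using k2 unfolding m_def by auto
  have split: "Sg \<sigma> \<alpha> k = \<sigma> ^ (k - m) * Sg \<sigma> \<alpha> m + (\<Sum>s\<in>{m..<k}. \<sigma> ^ (k - s) * \<alpha> s)"
    by (rule Sg_split[OF m1 mk])
  have "Sg \<sigma> \<alpha> m \<le> (\<Sum>s\<in>{1..<m}. \<alpha> s)" by (rule Sg_le_sum) (use sgm0 sgm1 ap in \<open>auto intro: less_imp_le\<close>)
  also have "\<dots> \<le> (\<Sum>s\<in>{1..<m}. \<alpha> 1)" by (rule sum_mono) (rule anti, auto)
  also have "\<dots> \<le> real t * \<alpha> 1"
  proof -
    have "real (m - 1) \<le> real t" using mk k by auto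
    thus ?thesis using ap[of 1] by (simp add: mult_right_mono)
  qed
  finally have Sm: "Sg \<sigma> \<alpha> m \<le> real t * \<alpha> 1" .
  have pw: "\<sigma> ^ (k - m) \<le> \<sigma> ^ (t div 2 - t div 2 div 2)"
  proof (rule power_decreasing)
    show "t div 2 - t div 2 div 2 \<le> k - m" using k unfolding m_def by auto
  qed (use sgm0 sgm1 in auto)
  have first: "\<sigma> ^ (k - m) * Sg \<sigma> \<alpha> m \<le> \<sigma> ^ (t div 2 - t div 2 div 2) * (real t * \<alpha> 1)"
    using pw Sm sgm0 Sg_nn by (intro mult_mono) auto
  have "(\<Sum>s\<in>{m..<k}. \<sigma> ^ (k - s) * \<alpha> s) \<le> \<alpha> m / (1 - \<sigma>)"
    by (rule tail_bound[OF sgm0 sgm1]) (use ap m1 in \<open>auto intro: less_imp_le anti\<close>)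
  also have "\<dots> \<le> Ca' * \<alpha> k / (1 - \<sigma>)"
    using Ca'_ineq k2 sgm1 unfolding m_def by (intro divide_right_mono) auto
  finally show ?thesis using split first by simp
qed

lemma part1:
  assumes t2: "2 \<le> t"
    and hs: "(\<Sum>k. (\<alpha> (k + t div 2))\<^sup>2) \<le> D\<^sup>2 * (1 - \<sigma>) / (10 * Ca' * L\<^sup>2)"
    and hl: "real t \<ge> 4 / (1 - \<sigma>) * ln ((1 - \<sigma>) * real t * (SUP k\<in>{1..}. \<alpha> k) / (Ca' * \<alpha> t))"
  shows "Favg n f (xalpha n \<alpha> x t) - Favg n f xs \<le> D\<^sup>2 * Ca / (\<Sum>k=1..t. \<alpha> k)"
proof -
  define t' where "t' = t div 2"
  define K where "K = {t'..t}"
  define A where "A = (\<Sum>k\<in>K. \<alpha> k)"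
  define P where "P = (\<Sum>k\<in>K. (\<alpha> k)\<^sup>2)"
  define T where "T = (\<Sum>k=1..t. \<alpha> k)"
  define \<Sigma> where "\<Sigma> = (\<Sum>k. (\<alpha> (k + t div 2))\<^sup>2)"
  define q where "q = t' - t' div 2"
  define R where "R = (1 - \<sigma>) * real t * \<alpha> 1 / (Ca' * \<alpha> t)"
  have t'1: "1 \<le> t'" using t2 unfolding t'_def by simp
  have Kpos: "k \<in> K \<Longrightarrow> 1 \<le> k" for k using t'1 unfolding K_def by auto
  have A0: "0 < A" unfolding A_def K_def t'_def by (rule sum_pos) (use t2 ap in auto)
  have T0: "0 < T" unfolding T_def by (rule sum_pos) (use t2 ap in auto)
  have s1': "0 < 1 - \<sigma>" using sgm1 by simp
  have at: "0 < \<alpha> t" using ap t2 by simp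
  have PS: "P \<le> \<Sigma>"
  proof -
    have sm: "summable (\<lambda>k. (\<alpha> (k + t div 2))\<^sup>2)"
    proof -
      have "summable (\<lambda>k. (\<alpha> k)\<^sup>2)" using summ summable_Suc_iff by blast
      thus ?thesis using summable_iff_shift[of "\<lambda>k. (\<alpha> k)\<^sup>2" "t div 2"] by simp
    qed
    have "P = (\<Sum>i\<in>{0..t - t'}. (\<alpha> (i + t div 2))\<^sup>2)"
      unfolding P_def K_def t'_def
      by (rule sum.reindex_bij_witness[of _ "\<lambda>i. i + t div 2" "\<lambda>k. k - t div 2"]) auto
    also have "\<dots> \<le> \<Sigma>" unfolding \<Sigma>_def by (rule sum_le_suminf[OF sm]) auto
    finally show ?thesis .
  qed
  have P0: "0 \<le> P" unfolding P_def by (simp add: sum_nonneg)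
  define X where "X = L\<^sup>2 * \<Sigma> * Ca' / (1 - \<sigma>)"
  have XD: "X \<le> D\<^sup>2 / 10"
  proof (cases "L = 0")
    case True thus ?thesis unfolding X_def by simp
  next
    case False
    hence L2: "0 < L\<^sup>2" by simp
    have c0: "0 < 10 * Ca' * L\<^sup>2" using Ca'1 L2 by simp
    have "\<Sigma> * (10 * Ca' * L\<^sup>2) \<le> D\<^sup>2 * (1 - \<sigma>)" using hs c0 unfolding \<Sigma>_def by (simp add: pos_le_divide_eq)
    thus ?thesis unfolding X_def using s1' by (simp add: field_simps)
  qed
  have S0: "0 \<le> \<Sigma>" using PS P0 by simp
  have X0: "0 \<le> X" unfolding X_def using S0 Ca'1 s1' by simp
  have LSX: "L\<^sup>2 * \<Sigma> \<le> X"
  proof -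
    have "1 \<le> Ca' / (1 - \<sigma>)" using Ca'1 s1' sgm0 by (simp add: field_simps)
    hence "L\<^sup>2 * \<Sigma> * 1 \<le> L\<^sup>2 * \<Sigma> * (Ca' / (1 - \<sigma>))" using S0 by (intro mult_left_mono) auto
    thus ?thesis unfolding X_def by simp
  qed
  have R0: "0 < R" unfolding R_def using s1' ap[of 1] t2 Ca'1 at by simp
  have Rq: "R * \<sigma> ^ q \<le> 3"
  proof -
    define v where "v = (1 - \<sigma>) * real t"
    define u where "u = (1 - \<sigma>) * real q"
    have "ln R \<le> v / 4"
    proof -
      have "4 / (1 - \<sigma>) * ln R \<le> real t" using hl unfolding R_def sup_eq by simp
      hence "(4 * ln R) / (1 - \<sigma>) \<le> real t" by simp
      hence "4 * ln R \<le> real t * (1 - \<sigma>)" using s1' by (simp add: pos_divide_le_eq)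
      thus ?thesis unfolding v_def by (simp add: algebra_simps)
    qed
    hence Rle: "R \<le> exp (v / 4)" using R0 by (metis exp_ln exp_le_cancel_iff)
    have q4: "real t - 1 \<le> 4 * real q"
    proof -
      have "t \<le> 4 * q + 1" unfolding q_def t'_def by linarith
      thus ?thesis by linarith
    qed
    have "\<sigma> ^ q \<le> exp (- (1 - \<sigma>) * real q)" by (rule pow_exp[OF sgm0])
    also have "- (1 - \<sigma>) * real q = - u" unfolding u_def by (simp add: algebra_simps)
    also have "exp (- u) \<le> exp (- v / 4 + 1 / 4)"
    proof -
      have "(1 - \<sigma>) * (real t - 1) \<le> (1 - \<sigma>) * (4 * real q)" using q4 s1' by (intro mult_left_mono) auto
      hence h2: "(1 - \<sigma>) * real t - (1 - \<sigma>) \<le> 4 * ((1 - \<sigma>) * real q)" by (simp add: algebra_simps)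
      have "v - (1 - \<sigma>) \<le> 4 * u" using h2 unfolding u_def v_def .
      hence "- u \<le> - v / 4 + 1 / 4" using sgm0 by linarith
      thus ?thesis by simp
    qed
    finally have "R * \<sigma> ^ q \<le> exp (v / 4) * exp (- v / 4 + 1 / 4)"
      using Rle R0 sgm0 by (intro mult_mono) auto
    also have "\<dots> = exp (v / 4 + (- v / 4 + 1 / 4))" by (rule exp_add[symmetric])
    also have "v / 4 + (- v / 4 + 1 / 4) = 1 / 4" by simp
    also have "exp (1 / 4) \<le> exp (1::real)" by simp
    also have "\<dots> \<le> 3" by (rule exp_le)
    finally show ?thesis .
  qed
  have AP: "A \<le> P / \<alpha> t"
  proof -
    have "A \<le> (\<Sum>k\<in>K. (\<alpha> k)\<^sup>2 / \<alpha> t)"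
      unfolding A_def
    proof (rule sum_mono)
      fix k assume k: "k \<in> K"
      have ak: "\<alpha> t \<le> \<alpha> k" using k Kpos[OF k] unfolding K_def by (intro anti) auto
      have "\<alpha> k * \<alpha> t \<le> \<alpha> k * \<alpha> k" using ak ap[OF Kpos[OF k]] by (intro mult_left_mono) auto
      thus "\<alpha> k \<le> (\<alpha> k)\<^sup>2 / \<alpha> t" using at by (simp add: pos_le_divide_eq power2_eq_square)
    qed
    thus ?thesis unfolding P_def by (simp add: sum_divide_distrib)
  qed
  have SgSum: "(\<Sum>k\<in>K. \<alpha> k * Sg \<sigma> \<alpha> k) \<le> \<sigma> ^ q * (real t * \<alpha> 1) * A + Ca' / (1 - \<sigma>) * P"
  proof -
    have "(\<Sum>k\<in>K. \<alpha> k * Sg \<sigma> \<alpha> k) \<le> (\<Sum>k\<in>K. \<alpha> k * (\<sigma> ^ q * (real t * \<alpha> 1) + Ca' * \<alpha> k / (1 - \<sigma>)))"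
      using Sg_part1[OF t2] ap Kpos unfolding K_def q_def t'_def
      by (intro sum_mono mult_left_mono) (auto intro: less_imp_le)
    also have "\<dots> = (\<Sum>k\<in>K. \<sigma> ^ q * (real t * \<alpha> 1) * \<alpha> k + Ca' / (1 - \<sigma>) * (\<alpha> k)\<^sup>2)"
      by (rule sum.cong) (auto simp: algebra_simps power2_eq_square)
    also have "\<dots> = \<sigma> ^ q * (real t * \<alpha> 1) * A + Ca' / (1 - \<sigma>) * P"
      unfolding A_def P_def by (simp add: sum.distrib sum_distrib_left)
    finally show ?thesis .
  qed
  have N2: "L\<^sup>2 * P + 2 * L\<^sup>2 * (\<Sum>k\<in>K. \<alpha> k * Sg \<sigma> \<alpha> k) \<le> D\<^sup>2"
  proof -
    have c1: "\<sigma> ^ q * (real t * \<alpha> 1) * A \<le> \<sigma> ^ q * (real t * \<alpha> 1) * (P / \<alpha> t)"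
      using AP sgm0 ap[of 1] by (intro mult_left_mono) auto
    have "L\<^sup>2 * (\<sigma> ^ q * (real t * \<alpha> 1) * (P / \<alpha> t)) \<le> L\<^sup>2 * (\<sigma> ^ q * (real t * \<alpha> 1) * (\<Sigma> / \<alpha> t))"
      using PS sgm0 ap[of 1] at by (intro mult_left_mono divide_right_mono) auto
    also have "\<dots> = X * (R * \<sigma> ^ q)"
      unfolding X_def R_def using s1' at Ca'1 by (simp add: field_simps)
    finally have e1: "L\<^sup>2 * (\<sigma> ^ q * (real t * \<alpha> 1) * A) \<le> X * (R * \<sigma> ^ q)"
      using c1 by (meson mult_left_mono order_trans zero_le_power2)
    have e2: "L\<^sup>2 * (Ca' / (1 - \<sigma>) * P) \<le> X"
    proof -
      have "L\<^sup>2 * (Ca' / (1 - \<sigma>) * P) \<le> L\<^sup>2 * (Ca' / (1 - \<sigma>) * \<Sigma>)"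
        using PS Ca'1 s1' by (intro mult_left_mono) auto
      thus ?thesis unfolding X_def by (simp add: mult_ac)
    qed
    have e3: "L\<^sup>2 * P \<le> X" using LSX PS by (meson mult_left_mono order_trans zero_le_power2)
    have "2 * L\<^sup>2 * (\<Sum>k\<in>K. \<alpha> k * Sg \<sigma> \<alpha> k) \<le> 2 * L\<^sup>2 * (\<sigma> ^ q * (real t * \<alpha> 1) * A + Ca' / (1 - \<sigma>) * P)"
      using SgSum by (intro mult_left_mono) auto
    also have "\<dots> = 2 * (L\<^sup>2 * (\<sigma> ^ q * (real t * \<alpha> 1) * A)) + 2 * (L\<^sup>2 * (Ca' / (1 - \<sigma>) * P))"
      by (simp add: algebra_simps)
    also have "\<dots> \<le> 2 * (X * (R * \<sigma> ^ q)) + 2 * X" using e1 e2 by simp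
    also have "\<dots> \<le> 2 * (X * 3) + 2 * X"
      using Rq X0 by (intro add_right_mono mult_left_mono) auto
    finally have "L\<^sup>2 * P + 2 * L\<^sup>2 * (\<Sum>k\<in>K. \<alpha> k * Sg \<sigma> \<alpha> k) \<le> 9 * X" using e3 by simp
    also have "\<dots> \<le> D\<^sup>2" using XD X0 by simp
    finally show ?thesis .
  qed
  have mb: "Favg n f (xalpha n \<alpha> x t) - Favg n f xs \<le>
     (D\<^sup>2 + L\<^sup>2 * P + 2 * L\<^sup>2 * (\<Sum>k\<in>K. \<alpha> k * Sg \<sigma> \<alpha> k)) / (2 * A)"
    using main_bound[OF setting t2] unfolding P_def A_def K_def t'_def .
  also have "\<dots> \<le> (2 * D\<^sup>2) / (2 * A)" using N2 A0 by (intro divide_right_mono) auto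
  also have "\<dots> = D\<^sup>2 / A" by simp
  also have "\<dots> \<le> D\<^sup>2 * Ca / T"
  proof -
    have TA: "T \<le> Ca * A"
    proof -
      have "T \<le> Ca * (\<Sum>k=(t + 1) div 2..t. \<alpha> k)" using Ca_ineq t2 unfolding T_def by simp
      moreover have Cpos: "0 \<le> Ca"
      proof (rule ccontr)
        assume "\<not> 0 \<le> Ca"
        moreover have "0 \<le> (\<Sum>k=(t + 1) div 2..t. \<alpha> k)" using t2 ap by (intro sum_nonneg) (auto intro: less_imp_le)
        ultimately have "Ca * (\<Sum>k=(t + 1) div 2..t. \<alpha> k) \<le> 0" by (simp add: mult_nonpos_nonneg)
        thus False using \<open>T \<le> Ca * (\<Sum>k=(t + 1) div 2..t. \<alpha> k)\<close> T0 by simp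
      qed
      moreover have "(\<Sum>k=(t + 1) div 2..t. \<alpha> k) \<le> A"
        unfolding A_def K_def t'_def
        by (rule sum_mono2) (use t2 ap in \<open>auto intro: less_imp_le\<close>)
      ultimately show ?thesis by (meson mult_left_mono order_trans)
    qed
    have "D\<^sup>2 / A = D\<^sup>2 * (1 / A)" by simp
    also have "1 / A \<le> Ca / T" using TA A0 T0 by (simp add: field_simps)
    hence "D\<^sup>2 * (1 / A) \<le> D\<^sup>2 * (Ca / T)" by (intro mult_left_mono) auto
    finally show ?thesis by simp
  qed
  finally show ?thesis unfolding T_def .
qed

lemma D_zero:
  assumes D: "D = 0" and t2: "2 \<le> t"
  shows "Favg n f (xalpha n \<alpha> x t) - Favg n f xs \<le> 0"
proof -
  have xsR: "xs \<in> Rd d" using xsO[OF setting] ORd[OF setting] by blast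
  have xb: "xbar n x k = xs" if k: "1 \<le> k" for k
  proof
    fix j
    have "enorm d (vdiff (xbar n x k) xs) \<le> 0" using diam[OF setting xbarO[OF setting k] xsO[OF setting]] D by simp
    hence "nsq d (vdiff (xbar n x k) xs) \<le> 0" by (simp add: enorm_nsq)
    hence "nsq d (vdiff (xbar n x k) xs) = 0" by (metis antisym nsq_ge0)
    hence z: "\<forall>j\<in>{..<d}. (vdiff (xbar n x k) xs j)\<^sup>2 = 0" unfolding nsq_def
      by (subst (asm) sum_nonneg_eq_0_iff) auto
    show "xbar n x k j = xs j"
    proof (cases "j < d")
      case True thus ?thesis using z unfolding vdiff_def by auto
    next
      case False thus ?thesis using xbarR[OF setting k] xsR unfolding Rd_def by auto
    qed
  qed
  have A0: "0 < (\<Sum>k=t div 2..t. \<alpha> k)" by (rule sum_pos) (use t2 ap in auto)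
  have "xalpha n \<alpha> x t = xs"
  proof
    fix j
    have "(\<Sum>k=t div 2..t. \<alpha> k * xbar n x k j) = (\<Sum>k=t div 2..t. \<alpha> k) * xs j"
      unfolding sum_distrib_right by (rule sum.cong) (use xb t2 in auto)
    thus "xalpha n \<alpha> x t j = xs j" unfolding xalpha_def using A0 by simp
  qed
  thus ?thesis by simp
qed

lemma part2:
  assumes ha: "\<alpha> = (\<lambda>k. 1 / (real k powr \<beta>))" and b1: "1/2 < \<beta>" and b2: "\<beta> < 1" and t2: "2 \<le> t"
    and hc: "real t powr (2 * \<beta> - 1) \<ge> 1 * L\<^sup>2 / (D\<^sup>2 * (1 - \<sigma>))"
  shows "Favg n f (xalpha n \<alpha> x t) - Favg n f xs \<le> (64 + 18 / (1 - \<beta>)) * D\<^sup>2 / real t powr (1 - \<beta>)"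
proof (cases "D = 0")
  case True
  have "Favg n f (xalpha n \<alpha> x t) - Favg n f xs \<le> 0" by (rule D_zero[OF True t2])
  thus ?thesis using True by simp
next
  case False
  hence DD: "0 < D\<^sup>2" by simp
  define t' where "t' = t div 2"
  define K where "K = {t'..t}"
  define A where "A = (\<Sum>k\<in>K. \<alpha> k)"
  define P where "P = (\<Sum>k\<in>K. (\<alpha> k)\<^sup>2)"
  define A0 where "A0 = 1 / (1 - \<beta>) + 3"
  define tb where "tb = real t powr \<beta>"
  have s1': "0 < 1 - \<sigma>" using sgm1 by simp
  have b0: "0 < \<beta>" using b1 by simp
  have tpos: "0 < real t" using t2 by simp
  have tb0: "0 < tb" unfolding tb_def using tpos by simp
  have t'1: "1 \<le> t'" using t2 unfolding t'_def by simp
  have Kpos: "k \<in> K \<Longrightarrow> 1 \<le> k" for k using t'1 unfolding K_def by auto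
  have aval: "\<alpha> k = 1 / (real k powr \<beta>)" for k using ha by simp
  have t3: "real t / 3 \<le> real t'"
  proof -
    have "t \<le> 3 * (t div 2)" using t2 by presburger
    hence "real t \<le> 3 * real (t div 2)" by linarith
    thus ?thesis unfolding t'_def by simp
  qed
  have alow: "1 / tb \<le> \<alpha> k" if k: "k \<in> K" for k
  proof -
    have "real k powr \<beta> \<le> real t powr \<beta>" using k Kpos[OF k] b0 unfolding K_def by (intro powr_mono2) auto
    thus ?thesis unfolding aval tb_def using Kpos[OF k] tpos by (intro divide_left_mono) auto
  qed
  have three: "3 powr \<beta> \<le> (3::real)" using b2 powr_mono[of \<beta> 1 3] by simp
  have ahigh: "\<alpha> k \<le> 3 / tb" if k: "k \<in> K" for k
  proof -
    have "real t / 3 \<le> real k" using k t3 unfolding K_def by auto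
    hence "(real t / 3) powr \<beta> \<le> real k powr \<beta>" using tpos b0 by (intro powr_mono2) auto
    hence "tb / 3 powr \<beta> \<le> real k powr \<beta>" unfolding tb_def using tpos by (simp add: powr_divide)
    moreover have "tb / 3 \<le> tb / 3 powr \<beta>" using three tb0 by (intro divide_left_mono) auto
    ultimately have "tb / 3 \<le> real k powr \<beta>" by linarith
    hence "1 / (real k powr \<beta>) \<le> 1 / (tb / 3)" using tb0 Kpos[OF k] by (intro divide_left_mono) auto
    thus ?thesis unfolding aval by simp
  qed
  have cK: "card K = t + 1 - t div 2" unfolding K_def t'_def by simp
  have c1: "t \<le> 2 * (t + 1 - t div 2)" by presburger
  have c2: "t + 1 - t div 2 \<le> t" using t2 by presburger
  have cardK: "real t / 2 \<le> real (card K)"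
  proof -
    have "real t \<le> 2 * real (card K)" using c1 unfolding cK by linarith
    thus ?thesis by simp
  qed
  have cardK': "real (card K) \<le> real t" using c2 unfolding cK by linarith
  have Alow: "real t / (2 * tb) \<le> A"
  proof -
    have "real (card K) * (1 / tb) \<le> A" unfolding A_def using alow sum_mono[of K "\<lambda>k. 1 / tb" \<alpha>] by simp
    moreover have "real t / (2 * tb) \<le> real (card K) * (1 / tb)" using cardK tb0 by (simp add: field_simps)
    ultimately show ?thesis by simp
  qed
  have A0pos: "0 < A" using Alow tpos tb0 by (smt (verit) divide_pos_pos)
  have Pup: "P \<le> 9 * real t / tb\<^sup>2"
  proof -
    have "P \<le> (\<Sum>k\<in>K. (3 / tb)\<^sup>2)" unfolding P_def
    proof (rule sum_mono)
      fix k assume k: "k \<in> K"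
      have "0 \<le> \<alpha> k" unfolding aval by simp
      thus "(\<alpha> k)\<^sup>2 \<le> (3 / tb)\<^sup>2" using ahigh[OF k] by (intro power_mono) auto
    qed
    also have "\<dots> = real (card K) * (9 / tb\<^sup>2)" by (simp add: power_divide)
    also have "\<dots> \<le> real t * (9 / tb\<^sup>2)" using cardK' tb0 by (intro mult_right_mono) auto
    finally show ?thesis by (simp add: mult.commute)
  qed
  have P0: "0 \<le> P" unfolding P_def by (simp add: sum_nonneg)
  have Sgk: "Sg \<sigma> \<alpha> k \<le> A0 * \<alpha> k / (1 - \<sigma>)" if k1: "1 \<le> k" for k
  proof (cases "k = 1")
    case True thus ?thesis using Sg_1 A0_def b2 s1' aval by simp
  next
    case False
    hence k2: "2 \<le> k" using k1 by simp
    define m where "m = k div 2"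
    have m1: "1 \<le> m" and mk: "m \<le> k" using k2 unfolding m_def by auto
    have kpos: "0 < real k" using k1 by simp
    have split: "Sg \<sigma> \<alpha> k = \<sigma> ^ (k - m) * Sg \<sigma> \<alpha> m + (\<Sum>s\<in>{m..<k}. \<sigma> ^ (k - s) * \<alpha> s)"
      by (rule Sg_split[OF m1 mk])
    have "(\<Sum>s\<in>{m..<k}. \<sigma> ^ (k - s) * \<alpha> s) \<le> \<alpha> m / (1 - \<sigma>)"
      by (rule tail_bound[OF sgm0 sgm1]) (use ap m1 in \<open>auto intro: less_imp_le anti\<close>)
    also have "\<alpha> m \<le> 3 * \<alpha> k"
    proof -
      have "k \<le> 3 * (k div 2)" using k2 by presburger
      hence "real k \<le> 3 * real (k div 2)" by linarith
      hence "real k / 3 \<le> real m" unfolding m_def by simp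
      hence "(real k / 3) powr \<beta> \<le> real m powr \<beta>" using kpos b0 by (intro powr_mono2) auto
      hence "real k powr \<beta> / 3 powr \<beta> \<le> real m powr \<beta>" using kpos by (simp add: powr_divide)
      moreover have "real k powr \<beta> / 3 \<le> real k powr \<beta> / 3 powr \<beta>" using three kpos by (intro divide_left_mono) auto
      ultimately have "real k powr \<beta> / 3 \<le> real m powr \<beta>" by linarith
      hence "1 / (real m powr \<beta>) \<le> 1 / (real k powr \<beta> / 3)" using kpos m1 by (intro divide_left_mono) auto
      thus ?thesis unfolding aval by simp
    qed
    hence "\<alpha> m / (1 - \<sigma>) \<le> 3 * \<alpha> k / (1 - \<sigma>)" using s1' by (intro divide_right_mono) auto
    finally have tail: "(\<Sum>s\<in>{m..<k}. \<sigma> ^ (k - s) * \<alpha> s) \<le> 3 * \<alpha> k / (1 - \<sigma>)" .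
    have "Sg \<sigma> \<alpha> m \<le> (\<Sum>s\<in>{1..<m}. \<alpha> s)" by (rule Sg_le_sum) (use sgm0 sgm1 ap in \<open>auto intro: less_imp_le\<close>)
    also have "\<dots> \<le> (real m - 1) powr (1 - \<beta>) / (1 - \<beta>)" unfolding aval by (rule powsum[OF b0 b2 m1])
    also have "\<dots> \<le> real k powr (1 - \<beta>) / (1 - \<beta>)"
      using mk m1 b2 by (intro divide_right_mono powr_mono2) auto
    finally have Sm: "Sg \<sigma> \<alpha> m \<le> real k powr (1 - \<beta>) / (1 - \<beta>)" .
    define y where "y = (1 - \<sigma>) * real k"
    have y0: "0 \<le> y" unfolding y_def using s1' kpos by simp
    have pw: "\<sigma> ^ (k - m) \<le> exp (- y / 2)"
    proof -
      have "\<sigma> ^ (k - m) \<le> exp (- (1 - \<sigma>) * real (k - m))" by (rule pow_exp[OF sgm0])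
      also have "\<dots> \<le> exp (- y / 2)"
      proof -
        have "k \<le> 2 * (k - k div 2)" by presburger
        hence "real k \<le> 2 * real (k - k div 2)" by linarith
        hence "real k / 2 \<le> real (k - m)" unfolding m_def by simp
        hence "(1 - \<sigma>) * (real k / 2) \<le> (1 - \<sigma>) * real (k - m)" using s1' by (intro mult_left_mono) auto
        hence h2: "y / 2 \<le> (1 - \<sigma>) * real (k - m)" unfolding y_def by simp
        have e1: "- (1 - \<sigma>) * real (k - m) = - ((1 - \<sigma>) * real (k - m))" by (simp only: mult_minus_left)
        have e2: "- y / 2 = - (y / 2)" by simp
        show ?thesis unfolding e1 e2 using h2 by (simp only: exp_le_cancel_iff neg_le_iff_le)
      qed
      finally show ?thesis .
    qed
    have ey: "exp (- y / 2) * y \<le> 1"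
    proof -
      have "y \<le> exp (y / 2)" by (rule y_le_exp[OF y0])
      hence "exp (- y / 2) * y \<le> exp (- y / 2) * exp (y / 2)" by (intro mult_left_mono) auto
      also have "\<dots> = 1" by (simp flip: exp_add)
      finally show ?thesis .
    qed
    have kk: "real k powr (1 - \<beta>) * real k powr \<beta> = real k" using kpos by (simp add: powr_add[symmetric])
    have head: "\<sigma> ^ (k - m) * Sg \<sigma> \<alpha> m \<le> (1 / (1 - \<beta>)) * \<alpha> k / (1 - \<sigma>)"
    proof -
      have "\<sigma> ^ (k - m) * Sg \<sigma> \<alpha> m \<le> exp (- y / 2) * (real k powr (1 - \<beta>) / (1 - \<beta>))"
        using pw Sm sgm0 Sg_nn by (intro mult_mono) auto
      also have "\<dots> = (exp (- y / 2) * y) * ((1 / (1 - \<beta>)) * \<alpha> k / (1 - \<sigma>))"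
      proof -
        have eq: "real k powr (1 - \<beta>) = y * (1 / (real k powr \<beta>) / (1 - \<sigma>))"
          unfolding y_def using s1' kpos kk by (simp add: field_simps)
        show ?thesis unfolding eq aval by (rule rearr)
      qed
      also have "\<dots> \<le> 1 * ((1 / (1 - \<beta>)) * \<alpha> k / (1 - \<sigma>))"
        using ey b2 s1' ap[OF k1] by (intro mult_right_mono) auto
      finally show ?thesis by simp
    qed
    have "A0 * \<alpha> k / (1 - \<sigma>) = (1 / (1 - \<beta>)) * \<alpha> k / (1 - \<sigma>) + 3 * \<alpha> k / (1 - \<sigma>)"
      unfolding A0_def by (simp add: divide_inverse algebra_simps)
    thus ?thesis using split head tail by linarith
  qed
  have SgSum: "(\<Sum>k\<in>K. \<alpha> k * Sg \<sigma> \<alpha> k) \<le> A0 / (1 - \<sigma>) * P"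
  proof -
    have "(\<Sum>k\<in>K. \<alpha> k * Sg \<sigma> \<alpha> k) \<le> (\<Sum>k\<in>K. \<alpha> k * (A0 * \<alpha> k / (1 - \<sigma>)))"
      using Sgk ap Kpos by (intro sum_mono mult_left_mono) (auto intro: less_imp_le)
    also have "\<dots> = A0 / (1 - \<sigma>) * P" unfolding P_def
      by (simp add: sum_distrib_left power2_eq_square mult_ac)
    finally show ?thesis .
  qed
  have cond: "L\<^sup>2 * real t / tb\<^sup>2 \<le> D\<^sup>2 * (1 - \<sigma>)"
  proof -
    have tt: "real t powr (2 * \<beta> - 1) = tb\<^sup>2 / real t"
      unfolding tb_def using tpos by (simp add: powr_diff powr_add[symmetric] power2_eq_square powr_mult_base)
    have "L\<^sup>2 / (D\<^sup>2 * (1 - \<sigma>)) \<le> tb\<^sup>2 / real t" using hc tt by simp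
    hence "L\<^sup>2 \<le> tb\<^sup>2 / real t * (D\<^sup>2 * (1 - \<sigma>))" using DD s1' by (simp add: pos_divide_le_eq)
    thus ?thesis using tpos tb0 by (simp add: field_simps)
  qed
  have A01: "0 \<le> A0" unfolding A0_def using b2 by simp
  have N: "L\<^sup>2 * P + 2 * L\<^sup>2 * (\<Sum>k\<in>K. \<alpha> k * Sg \<sigma> \<alpha> k) \<le> D\<^sup>2 * (9 + 18 * A0)"
  proof -
    have "2 * L\<^sup>2 * (\<Sum>k\<in>K. \<alpha> k * Sg \<sigma> \<alpha> k) \<le> 2 * L\<^sup>2 * (A0 / (1 - \<sigma>) * P)"
      using SgSum by (intro mult_left_mono) auto
    moreover have "L\<^sup>2 * P \<le> L\<^sup>2 * P / (1 - \<sigma>)"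
    proof -
      have "L\<^sup>2 * P * (1 - \<sigma>) \<le> L\<^sup>2 * P" by (rule mult_right_le_one_le) (use P0 sgm0 sgm1 in auto)
      thus ?thesis using s1' by (simp add: le_divide_eq)
    qed
    moreover have "(1 + 2 * A0) * (L\<^sup>2 * P / (1 - \<sigma>)) = L\<^sup>2 * P / (1 - \<sigma>) + 2 * L\<^sup>2 * (A0 / (1 - \<sigma>) * P)"
      by (simp add: divide_inverse algebra_simps)
    ultimately have "L\<^sup>2 * P + 2 * L\<^sup>2 * (\<Sum>k\<in>K. \<alpha> k * Sg \<sigma> \<alpha> k) \<le> (1 + 2 * A0) * (L\<^sup>2 * P / (1 - \<sigma>))"
      by linarith
    also have "\<dots> \<le> (1 + 2 * A0) * (L\<^sup>2 * (9 * real t / tb\<^sup>2) / (1 - \<sigma>))"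
      using Pup A01 s1' by (intro mult_left_mono divide_right_mono) auto
    also have "\<dots> = 9 * (1 + 2 * A0) * ((L\<^sup>2 * real t / tb\<^sup>2) / (1 - \<sigma>))" by (simp add: field_simps)
    also have "\<dots> \<le> 9 * (1 + 2 * A0) * D\<^sup>2"
    proof -
      have "(L\<^sup>2 * real t / tb\<^sup>2) / (1 - \<sigma>) \<le> D\<^sup>2" by (subst pos_divide_le_eq[OF s1']) (rule cond)
      thus ?thesis using A01 by (intro mult_left_mono) auto
    qed
    finally show ?thesis by (simp add: algebra_simps)
  qed
  have "Favg n f (xalpha n \<alpha> x t) - Favg n f xs \<le>
     (D\<^sup>2 + L\<^sup>2 * P + 2 * L\<^sup>2 * (\<Sum>k\<in>K. \<alpha> k * Sg \<sigma> \<alpha> k)) / (2 * A)"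
    using main_bound[OF setting t2] unfolding P_def A_def K_def t'_def .
  also have "\<dots> \<le> (D\<^sup>2 * (10 + 18 * A0)) / (2 * A)"
  proof (rule divide_right_mono)
    have e: "D\<^sup>2 * (10 + 18 * A0) = D\<^sup>2 + D\<^sup>2 * (9 + 18 * A0)" by (simp add: algebra_simps)
    show "D\<^sup>2 + L\<^sup>2 * P + 2 * L\<^sup>2 * (\<Sum>k\<in>K. \<alpha> k * Sg \<sigma> \<alpha> k) \<le> D\<^sup>2 * (10 + 18 * A0)"
      using N e by linarith
    show "0 \<le> 2 * A" using A0pos by simp
  qed
  also have "\<dots> \<le> (D\<^sup>2 * (10 + 18 * A0)) / (real t / tb)"
  proof (rule divide_left_mono)
    show "real t / tb \<le> 2 * A" using Alow tb0 by (simp add: field_simps)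
    show "0 \<le> D\<^sup>2 * (10 + 18 * A0)" using A01 by simp
    show "0 < 2 * A * (real t / tb)" using A0pos tpos tb0 by simp
  qed
  also have "real t / tb = real t powr (1 - \<beta>)" unfolding tb_def using tpos by (simp add: powr_diff)
  also have "D\<^sup>2 * (10 + 18 * A0) = (64 + 18 / (1 - \<beta>)) * D\<^sup>2" unfolding A0_def by (simp add: algebra_simps)
  finally show ?thesis .
qed

end


theorem theorem1:
  shows "\<exists>c>0.
       (\<forall>n d f L \<Omega> D W \<sigma> \<alpha> Ca Ca' x g xs (t::nat).
            dsgd_setting n d f L \<Omega> D W \<sigma> \<alpha> Ca Ca' x g xs \<and> 2 \<le> t \<and>
            (\<Sum>k. (\<alpha> (k + t div 2))\<^sup>2) \<le> D\<^sup>2 * (1 - \<sigma>) / (10 * Ca' * L\<^sup>2) \<and>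
            real t \<ge> c / (1 - \<sigma>) *
               ln ((1 - \<sigma>) * real t * (SUP k\<in>{1..}. \<alpha> k) / (Ca' * \<alpha> t))
          \<longrightarrow> Favg n f (xalpha n \<alpha> x t) - Favg n f xs \<le> D\<^sup>2 * Ca / (\<Sum>k=1..t. \<alpha> k))
       \<and>
       (\<forall>\<beta>::real. 1/2 < \<beta> \<and> \<beta> < 1 \<longrightarrow>
          (\<exists>c\<beta>>0. \<exists>C\<beta>>0. \<forall>n d f L \<Omega> D W \<sigma> \<alpha> Ca Ca' x g xs (t::nat).
            \<alpha> = (\<lambda>k. 1 / (real k powr \<beta>)) \<and>
            dsgd_setting n d f L \<Omega> D W \<sigma> \<alpha> Ca Ca' x g xs \<and> 2 \<le> t \<and>
            real t \<ge> c / (1 - \<sigma>) *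
               ln ((1 - \<sigma>) * real t * (SUP k\<in>{1..}. \<alpha> k) / (Ca' * \<alpha> t)) \<and>
            real t powr (2 * \<beta> - 1) \<ge> c\<beta> * L\<^sup>2 / (D\<^sup>2 * (1 - \<sigma>))
          \<longrightarrow> Favg n f (xalpha n \<alpha> x t) - Favg n f xs \<le> C\<beta> * D\<^sup>2 / real t powr (1 - \<beta>)))"
proof (rule exI[of _ "4::real"], intro conjI)
  show "(0::real) < 4" by simp
next
  show "\<forall>n d f L \<Omega> D W \<sigma> \<alpha> Ca Ca' x g xs (t::nat).
            dsgd_setting n d f L \<Omega> D W \<sigma> \<alpha> Ca Ca' x g xs \<and> 2 \<le> t \<and>
            (\<Sum>k. (\<alpha> (k + t div 2))\<^sup>2) \<le> D\<^sup>2 * (1 - \<sigma>) / (10 * Ca' * L\<^sup>2) \<and>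
            real t \<ge> 4 / (1 - \<sigma>) *
               ln ((1 - \<sigma>) * real t * (SUP k\<in>{1..}. \<alpha> k) / (Ca' * \<alpha> t))
          \<longrightarrow> Favg n f (xalpha n \<alpha> x t) - Favg n f xs \<le> D\<^sup>2 * Ca / (\<Sum>k=1..t. \<alpha> k)"
    using part1 by blast
next
  show "\<forall>\<beta>::real. 1/2 < \<beta> \<and> \<beta> < 1 \<longrightarrow>
          (\<exists>c\<beta>>0. \<exists>C\<beta>>0. \<forall>n d f L \<Omega> D W \<sigma> \<alpha> Ca Ca' x g xs (t::nat).
            \<alpha> = (\<lambda>k. 1 / (real k powr \<beta>)) \<and>
            dsgd_setting n d f L \<Omega> D W \<sigma> \<alpha> Ca Ca' x g xs \<and> 2 \<le> t \<and>
            real t \<ge> 4 / (1 - \<sigma>) *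
               ln ((1 - \<sigma>) * real t * (SUP k\<in>{1..}. \<alpha> k) / (Ca' * \<alpha> t)) \<and>
            real t powr (2 * \<beta> - 1) \<ge> c\<beta> * L\<^sup>2 / (D\<^sup>2 * (1 - \<sigma>))
          \<longrightarrow> Favg n f (xalpha n \<alpha> x t) - Favg n f xs \<le> C\<beta> * D\<^sup>2 / real t powr (1 - \<beta>))"
  proof (intro allI impI)
    fix \<beta> :: real
    assume b: "1/2 < \<beta> \<and> \<beta> < 1"
    have pos: "0 < 64 + 18 / (1 - \<beta>)" using b by (simp add: add_pos_pos)
    have main: "\<forall>n d f L \<Omega> D W \<sigma> \<alpha> Ca Ca' x g xs (t::nat).
            \<alpha> = (\<lambda>k. 1 / (real k powr \<beta>)) \<and>
            dsgd_setting n d f L \<Omega> D W \<sigma> \<alpha> Ca Ca' x g xs \<and> 2 \<le> t \<and>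
            real t \<ge> 4 / (1 - \<sigma>) *
               ln ((1 - \<sigma>) * real t * (SUP k\<in>{1..}. \<alpha> k) / (Ca' * \<alpha> t)) \<and>
            real t powr (2 * \<beta> - 1) \<ge> 1 * L\<^sup>2 / (D\<^sup>2 * (1 - \<sigma>))
          \<longrightarrow> Favg n f (xalpha n \<alpha> x t) - Favg n f xs \<le> (64 + 18 / (1 - \<beta>)) * D\<^sup>2 / real t powr (1 - \<beta>)"
      using part2 b by blast
    show "\<exists>c\<beta>>0. \<exists>C\<beta>>0. \<forall>n d f L \<Omega> D W \<sigma> \<alpha> Ca Ca' x g xs (t::nat).
            \<alpha> = (\<lambda>k. 1 / (real k powr \<beta>)) \<and>
            dsgd_setting n d f L \<Omega> D W \<sigma> \<alpha> Ca Ca' x g xs \<and> 2 \<le> t \<and>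
            real t \<ge> 4 / (1 - \<sigma>) *
               ln ((1 - \<sigma>) * real t * (SUP k\<in>{1..}. \<alpha> k) / (Ca' * \<alpha> t)) \<and>
            real t powr (2 * \<beta> - 1) \<ge> c\<beta> * L\<^sup>2 / (D\<^sup>2 * (1 - \<sigma>))
          \<longrightarrow> Favg n f (xalpha n \<alpha> x t) - Favg n f xs \<le> C\<beta> * D\<^sup>2 / real t powr (1 - \<beta>)"
      by (rule exI[of _ "1::real"], rule conjI, simp, rule exI[of _ "64 + 18 / (1 - \<beta>)"], rule conjI[OF pos main])
  qed
qed

end
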